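(* Let $I$ be an $\mathfrak m$-primary ideal of $R$ and let $r>0$ with $\mathfrak m^r\subset I$. Then the element $I^{(m)}/A^{(m)}\in\mathbf G(X)$ is the same for all integers $m\ge r$. Denoting it by $\iota(I)$, the map $I\mapsto\iota(I)$ is a homomorphism from the semigroup $\mathbf K_{ideal}(R)$ to $\mathbf G(X)$ and thus induces a group homomorphism $\iota:\mathbf G_{ideal}(R)\to\mathbf G(X)$.
   Context: $\mathbf{k}$ is algebraically closed; $X\subset\mathbb{A}^N$ is an affine variety over $\mathbf k$ (possibly reducible) whose irreducible components $X_1,\ldots,X_r$ all have dimension $n$, containing the origin $o$; $R=\mathcal O_{X,o}$ with maximal ideal $\mathfrak m$; an ideal is $\mathfrak m$-primary if it contains a power of $\mathfrak m$. $\mathbf K_{ideal}(R)$ is the semigroup of $\mathfrak m$-primary ideals under product of ideals and $\mathbf G_{ideal}(R)$ is its Grothendieck group. For a commutative semigroup $K$, its Grothendieck group is the group of formal quotients of $K/\!\sim$ where $x\sim y$ iff $xz=yz$ for some $z\in K$. $A^{(m)}\subset R$ is the set of restrictions to $X$ of polynomials in $\mathbf k[x_1,\ldots,x_N]$ of degree $\le m$, and $I^{(m)}=A^{(m)}\cap I$. $\mathbf K(X)$ is the set of finite-dimensional $\mathbf k$-subspaces of the algebra $\mathbf k(X)$ of rational functions on $X$ with nonzero restriction to each $X_i$, two subspaces being identified if their restrictions to each $X_i$ coincide, a semigroup under $LM=\operatorname{span}\{fg\}$; $\mathbf G(X)$ is its Grothendieck group. *)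

theory Defs
  imports "HOL-Library.Poly_Mapping" "HOL-Computational_Algebra.Polynomial"
begin

type_synonym ('n, 'k) mpol = "('n \<Rightarrow>\<^sub>0 nat) \<Rightarrow>\<^sub>0 'k"

definition alg_closed_type :: "'k::field itself \<Rightarrow> bool" where
  "alg_closed_type _ \<longleftrightarrow> (\<forall>p :: 'k poly. degree p > 0 \<longrightarrow> (\<exists>x. poly p x = 0))"

definition peval :: "('n::finite, 'k::field) mpol \<Rightarrow> ('n \<Rightarrow> 'k) \<Rightarrow> 'k" where
  "peval p x = (\<Sum>a\<in>Poly_Mapping.keys p. Poly_Mapping.lookup p a * (\<Prod>i\<in>UNIV. x i ^ Poly_Mapping.lookup (a :: 'n \<Rightarrow>\<^sub>0 nat) i))"

definition tdeg :: "('n::finite, 'k::field) mpol \<Rightarrow> nat" where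
  "tdeg p = Max (insert 0 ((\<lambda>a :: 'n \<Rightarrow>\<^sub>0 nat. \<Sum>i\<in>UNIV. Poly_Mapping.lookup a i) ` Poly_Mapping.keys p))"

definition const_pol :: "'k::field \<Rightarrow> ('n::finite, 'k) mpol" where
  "const_pol c = Poly_Mapping.single 0 c"

definition origin :: "'n \<Rightarrow> 'k::field" where
  "origin = (\<lambda>_. 0)"

definition zero_set :: "('n::finite, 'k::field) mpol set \<Rightarrow> ('n \<Rightarrow> 'k) set" where
  "zero_set S = {x. \<forall>f\<in>S. peval f x = 0}"

definition zclosed :: "('n::finite \<Rightarrow> 'k::field) set \<Rightarrow> bool" where
  "zclosed Y \<longleftrightarrow> (\<exists>S. Y = zero_set S)"

definition zirred :: "('n::finite \<Rightarrow> 'k::field) set \<Rightarrow> bool" where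
  "zirred Y \<longleftrightarrow> zclosed Y \<and> Y \<noteq> {} \<and>
     (\<forall>A B. zclosed A \<longrightarrow> zclosed B \<longrightarrow> Y = A \<union> B \<longrightarrow> Y = A \<or> Y = B)"

definition zcomponent :: "('n::finite \<Rightarrow> 'k::field) set \<Rightarrow> ('n \<Rightarrow> 'k) set \<Rightarrow> bool" where
  "zcomponent X Y \<longleftrightarrow> zirred Y \<and> Y \<subseteq> X \<and> (\<forall>Z. zirred Z \<longrightarrow> Y \<subseteq> Z \<longrightarrow> Z \<subseteq> X \<longrightarrow> Z = Y)"

definition zchain :: "('n::finite \<Rightarrow> 'k::field) set \<Rightarrow> nat \<Rightarrow> bool" where
  "zchain Y d \<longleftrightarrow> (\<exists>c :: nat \<Rightarrow> ('n \<Rightarrow> 'k) set.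
      (\<forall>i\<le>d. zirred (c i)) \<and> (\<forall>i<d. c i \<subset> c (Suc i)) \<and> c d = Y)"

definition zdim_eq :: "('n::finite \<Rightarrow> 'k::field) set \<Rightarrow> nat \<Rightarrow> bool" where
  "zdim_eq Y d \<longleftrightarrow> zchain Y d \<and> \<not> zchain Y (Suc d)"

definition affine_variety_equidim :: "('n::finite \<Rightarrow> 'k::field) set \<Rightarrow> nat \<Rightarrow> bool" where
  "affine_variety_equidim X n \<longleftrightarrow> zclosed X \<and> X \<noteq> {} \<and> (\<forall>Y. zcomponent X Y \<longrightarrow> zdim_eq Y n)"

section \<open>The local ring R = O_{X,o}: elements f/g with g(o) \<noteq> 0\<close>

type_synonym ('n, 'k) frac = "('n, 'k) mpol \<times> ('n, 'k) mpol"

definition loc_elem :: "('n::finite, 'k::field) frac \<Rightarrow> bool" where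
  "loc_elem p \<longleftrightarrow> peval (snd p) origin \<noteq> 0"

definition loc_eq :: "('n::finite \<Rightarrow> 'k::field) set \<Rightarrow> ('n, 'k) frac \<Rightarrow> ('n, 'k) frac \<Rightarrow> bool" where
  "loc_eq X p q \<longleftrightarrow> (\<exists>h. peval h origin \<noteq> 0 \<and>
     (\<forall>x\<in>X. peval h x * (peval (fst p) x * peval (snd q) x - peval (fst q) x * peval (snd p) x) = 0))"

definition frac_add :: "('n::finite, 'k::field) frac \<Rightarrow> ('n, 'k) frac \<Rightarrow> ('n, 'k) frac" where
  "frac_add p q = (fst p * snd q + fst q * snd p, snd p * snd q)"

definition frac_mul :: "('n::finite, 'k::field) frac \<Rightarrow> ('n, 'k) frac \<Rightarrow> ('n, 'k) frac" where
  "frac_mul p q = (fst p * fst q, snd p * snd q)"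

definition frac_of_pol :: "('n::finite, 'k::field) mpol \<Rightarrow> ('n, 'k) frac" where
  "frac_of_pol f = (f, 1)"

text \<open>ideals of R, represented as saturated sets of representatives\<close>
definition loc_ideal :: "('n::finite \<Rightarrow> 'k::field) set \<Rightarrow> ('n, 'k) frac set \<Rightarrow> bool" where
  "loc_ideal X I \<longleftrightarrow> I \<subseteq> {p. loc_elem p} \<and> (0, 1) \<in> I \<and>
     (\<forall>p\<in>I. \<forall>q. loc_elem q \<longrightarrow> loc_eq X p q \<longrightarrow> q \<in> I) \<and>
     (\<forall>p\<in>I. \<forall>q\<in>I. frac_add p q \<in> I) \<and>
     (\<forall>p\<in>I. \<forall>a. loc_elem a \<longrightarrow> frac_mul a p \<in> I)"

definition loc_ring :: "('n::finite, 'k::field) frac set" where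
  "loc_ring = {p. loc_elem p}"

definition loc_max :: "('n::finite, 'k::field) frac set" where
  "loc_max = {p. loc_elem p \<and> peval (fst p) origin = 0}"

definition ideal_prod :: "('n::finite \<Rightarrow> 'k::field) set \<Rightarrow> ('n, 'k) frac set \<Rightarrow> ('n, 'k) frac set \<Rightarrow> ('n, 'k) frac set" where
  "ideal_prod X I J = \<Inter>{K. loc_ideal X K \<and> (\<forall>p\<in>I. \<forall>q\<in>J. frac_mul p q \<in> K)}"

primrec ideal_pow :: "('n::finite \<Rightarrow> 'k::field) set \<Rightarrow> ('n, 'k) frac set \<Rightarrow> nat \<Rightarrow> ('n, 'k) frac set" where
  "ideal_pow X I 0 = loc_ring"
| "ideal_pow X I (Suc r) = ideal_prod X (ideal_pow X I r) I"

definition m_primary :: "('n::finite \<Rightarrow> 'k::field) set \<Rightarrow> ('n, 'k) frac set \<Rightarrow> bool" where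
  "m_primary X I \<longleftrightarrow> loc_ideal X I \<and> (\<exists>r. ideal_pow X loc_max r \<subseteq> I)"

text \<open>A^{(m)} and I^{(m)} = A^{(m)} \<inter> I, as sets of polynomials representing them\<close>
definition Apol :: "nat \<Rightarrow> ('n::finite, 'k::field) mpol set" where
  "Apol m = {f. tdeg f \<le> m}"

definition Ipol :: "('n, 'k) frac set \<Rightarrow> nat \<Rightarrow> ('n::finite, 'k::field) mpol set" where
  "Ipol I m = {f. tdeg f \<le> m \<and> frac_of_pol f \<in> I}"

text \<open>f/g with g a non-zero-divisor of k[X], i.e. g not identically zero on any component\<close>
definition rat_elem :: "('n::finite \<Rightarrow> 'k::field) set \<Rightarrow> ('n, 'k) frac \<Rightarrow> bool" where
  "rat_elem X p \<longleftrightarrow> (\<forall>Y. zcomponent X Y \<longrightarrow> \<not> (\<forall>x\<in>Y. peval (snd p) x = 0))"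

text \<open>equality of f/g and f'/g' after restriction to the set Y (Y = X: equality in k(X))\<close>
definition rat_eq_on :: "('n::finite \<Rightarrow> 'k::field) set \<Rightarrow> ('n, 'k) frac \<Rightarrow> ('n, 'k) frac \<Rightarrow> bool" where
  "rat_eq_on Y p q \<longleftrightarrow> (\<forall>x\<in>Y. peval (fst p) x * peval (snd q) x = peval (fst q) x * peval (snd p) x)"

text \<open>k-subspaces of k(X), represented as saturated sets of representatives\<close>
definition rsub :: "('n::finite \<Rightarrow> 'k::field) set \<Rightarrow> ('n, 'k) frac set \<Rightarrow> bool" where
  "rsub X L \<longleftrightarrow> L \<subseteq> {p. rat_elem X p} \<and> (0, 1) \<in> L \<and>
     (\<forall>p\<in>L. \<forall>q. rat_elem X q \<longrightarrow> rat_eq_on X p q \<longrightarrow> q \<in> L) \<and>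
     (\<forall>p\<in>L. \<forall>q\<in>L. frac_add p q \<in> L) \<and>
     (\<forall>p\<in>L. \<forall>c. frac_mul (const_pol c, 1) p \<in> L)"

definition rspan :: "('n::finite \<Rightarrow> 'k::field) set \<Rightarrow> ('n, 'k) frac set \<Rightarrow> ('n, 'k) frac set" where
  "rspan X S = \<Inter>{L. rsub X L \<and> S \<subseteq> L}"

definition KX :: "('n::finite \<Rightarrow> 'k::field) set \<Rightarrow> ('n, 'k) frac set \<Rightarrow> bool" where
  "KX X L \<longleftrightarrow> rsub X L \<and> (\<exists>F. finite F \<and> F \<subseteq> L \<and> L = rspan X F) \<and>
     (\<forall>Y. zcomponent X Y \<longrightarrow> (\<exists>p\<in>L. \<not> (\<forall>x\<in>Y. peval (fst p) x = 0)))"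

definition KX_eq :: "('n::finite \<Rightarrow> 'k::field) set \<Rightarrow> ('n, 'k) frac set \<Rightarrow> ('n, 'k) frac set \<Rightarrow> bool" where
  "KX_eq X L M \<longleftrightarrow> (\<forall>Y. zcomponent X Y \<longrightarrow>
     (\<forall>p\<in>L. \<exists>q\<in>M. rat_eq_on Y p q) \<and> (\<forall>q\<in>M. \<exists>p\<in>L. rat_eq_on Y p q))"

definition KX_mul :: "('n::finite \<Rightarrow> 'k::field) set \<Rightarrow> ('n, 'k) frac set \<Rightarrow> ('n, 'k) frac set \<Rightarrow> ('n, 'k) frac set" where
  "KX_mul X L M = rspan X {frac_mul p q | p q. p \<in> L \<and> q \<in> M}"

definition rsub_of_pols :: "('n::finite \<Rightarrow> 'k::field) set \<Rightarrow> ('n, 'k) mpol set \<Rightarrow> ('n, 'k) frac set" where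
  "rsub_of_pols X P = rspan X (frac_of_pol ` P)"

text \<open>equality of formal quotients a/b = c/d in the Grothendieck group G(X):
  [a d] = [c b] in K(X)/~, i.e. a d z = c b z (in K(X)) for some z \<in> K(X)\<close>
definition GX_eq :: "('n::finite \<Rightarrow> 'k::field) set \<Rightarrow> ('n, 'k) frac set \<times> ('n, 'k) frac set
     \<Rightarrow> ('n, 'k) frac set \<times> ('n, 'k) frac set \<Rightarrow> bool" where
  "GX_eq X ab cd \<longleftrightarrow> (\<exists>z. KX X z \<and>
     KX_eq X (KX_mul X (KX_mul X (fst ab) (snd cd)) z) (KX_mul X (KX_mul X (fst cd) (snd ab)) z))"

end

theory Submission
  imports Defs
begin


definition dg :: "('n::finite \<Rightarrow>\<^sub>0 nat) \<Rightarrow> nat" where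
  "dg a = (\<Sum>i\<in>UNIV. Poly_Mapping.lookup a i)"

definition mon :: "('n::finite \<Rightarrow>\<^sub>0 nat) \<Rightarrow> ('n \<Rightarrow> 'k::field) \<Rightarrow> 'k" where
  "mon a x = (\<Prod>i\<in>UNIV. x i ^ Poly_Mapping.lookup a i)"

lemma peval_mon: "peval p x = (\<Sum>a\<in>Poly_Mapping.keys p. Poly_Mapping.lookup p a * mon a x)"
  by (simp add: peval_def mon_def)

lemma peval_superset:
  assumes "finite K" "Poly_Mapping.keys p \<subseteq> K"
  shows "peval p x = (\<Sum>a\<in>K. Poly_Mapping.lookup p a * mon a x)"
  unfolding peval_mon
  by (rule sum.mono_neutral_left) (use assms in \<open>auto simp: in_keys_iff\<close>)

lemma peval_add: "peval (p + q) x = peval p x + peval q x"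
proof -
  let ?K = "Poly_Mapping.keys p \<union> Poly_Mapping.keys q"
  have "peval (p+q) x = (\<Sum>a\<in>?K. Poly_Mapping.lookup (p+q) a * mon a x)"
    by (rule peval_superset) (auto dest: set_mp[OF keys_add])
  also have "\<dots> = (\<Sum>a\<in>?K. Poly_Mapping.lookup p a * mon a x) + (\<Sum>a\<in>?K. Poly_Mapping.lookup q a * mon a x)"
    by (simp add: lookup_add distrib_right sum.distrib)
  also have "\<dots> = peval p x + peval q x"
    by (subst (1 2) peval_superset[of ?K]) auto
  finally show ?thesis .
qed

lemma peval_zero[simp]: "peval 0 x = 0" by (simp add: peval_def)

lemma peval_single: "peval (Poly_Mapping.single a c) x = c * mon a x"
  by (simp add: peval_mon)

lemma peval_sum: "finite S \<Longrightarrow> peval (\<Sum>s\<in>S. f s) x = (\<Sum>s\<in>S. peval (f s) x)"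
  by (induct S rule: finite_induct) (auto simp: peval_add)

lemma mon_add: "mon (a + b) x = mon a x * mon b x"
  by (simp add: mon_def lookup_add power_add prod.distrib)

lemma poly_sum_single: "p = (\<Sum>a\<in>Poly_Mapping.keys p. Poly_Mapping.single a (Poly_Mapping.lookup p a))"
proof (rule poly_mapping_eqI)
  fix k
  show "Poly_Mapping.lookup p k = Poly_Mapping.lookup (\<Sum>a\<in>Poly_Mapping.keys p. Poly_Mapping.single a (Poly_Mapping.lookup p a)) k"
    by (simp add: lookup_sum lookup_single when_def in_keys_iff)
qed

lemma peval_mult_single: "peval (Poly_Mapping.single a c * q) x = c * mon a x * peval q x"
proof -
  have "Poly_Mapping.single a c * q = (\<Sum>b\<in>Poly_Mapping.keys q. Poly_Mapping.single a c * Poly_Mapping.single b (Poly_Mapping.lookup q b))"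
    by (subst poly_sum_single[of q]) (simp add: sum_distrib_left)
  then have "peval (Poly_Mapping.single a c * q) x = (\<Sum>b\<in>Poly_Mapping.keys q. peval (Poly_Mapping.single a c * Poly_Mapping.single b (Poly_Mapping.lookup q b)) x)"
    by (simp add: peval_sum)
  also have "\<dots> = (\<Sum>b\<in>Poly_Mapping.keys q. c * mon a x * (Poly_Mapping.lookup q b * mon b x))"
    by (simp add: mult_single peval_single mon_add mult_ac)
  also have "\<dots> = c * mon a x * peval q x"
    by (simp add: peval_mon sum_distrib_left)
  finally show ?thesis .
qed

lemma peval_mult: "peval (p * q) x = peval p x * peval q x"
proof -
  have "p * q = (\<Sum>a\<in>Poly_Mapping.keys p. Poly_Mapping.single a (Poly_Mapping.lookup p a) * q)"
    by (subst poly_sum_single[of p]) (simp add: sum_distrib_right)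
  then have "peval (p * q) x = (\<Sum>a\<in>Poly_Mapping.keys p. peval (Poly_Mapping.single a (Poly_Mapping.lookup p a) * q) x)"
    by (simp add: peval_sum)
  also have "\<dots> = peval p x * peval q x"
    unfolding peval_mult_single by (simp add: peval_mon sum_distrib_right)
  finally show ?thesis .
qed

lemma peval_const[simp]: "peval (const_pol c) x = c"
  by (simp add: const_pol_def peval_single mon_def)

lemma peval_one[simp]: "peval 1 x = 1"
  using peval_const[of 1 x] by (simp add: const_pol_def)

lemma peval_uminus: "peval (- p) x = - peval p x"
proof -
  have "peval p x + peval (- p) x = 0" using peval_add[of p "-p" x] by simp
  then show ?thesis by (simp add: eq_neg_iff_add_eq_0 add.commute)
qed

lemma peval_diff: "peval (p - q) x = peval p x - peval q x"
  using peval_add[of p "-q" x] by (simp add: peval_uminus)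

lemma const_pol_mult: "const_pol a * const_pol b = const_pol (a * b)"
  by (simp add: const_pol_def mult_single)

lemma const_pol_one[simp]: "const_pol 1 = 1" by (simp add: const_pol_def)
lemma const_pol_zero[simp]: "const_pol 0 = 0" by (simp add: const_pol_def)
lemma const_pol_add: "const_pol (a + b) = const_pol a + const_pol b"
  by (simp add: const_pol_def single_add)

lemma dg_add: "dg (a + b) = dg a + dg b"
  by (simp add: dg_def lookup_add sum.distrib)

lemma dg_zero[simp]: "dg 0 = 0" by (simp add: dg_def)

lemma dg_eq_0: "dg a = 0 \<longleftrightarrow> a = 0"
  by (auto simp: dg_def poly_mapping_eq_iff fun_eq_iff)

lemma tdeg_dg: "tdeg p = Max (insert 0 (dg ` Poly_Mapping.keys p))"
  unfolding tdeg_def dg_def by (rule refl)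

lemma tdeg_le_iff: "tdeg p \<le> m \<longleftrightarrow> (\<forall>a\<in>Poly_Mapping.keys p. dg a \<le> m)"
  by (simp add: tdeg_dg)

lemma dg_le_tdeg: "a \<in> Poly_Mapping.keys p \<Longrightarrow> dg a \<le> tdeg p"
proof -
  assume "a \<in> Poly_Mapping.keys p"
  moreover have "\<forall>a\<in>Poly_Mapping.keys p. dg a \<le> tdeg p" using tdeg_le_iff[of p "tdeg p"] by (simp only: order_refl)
  ultimately show ?thesis by blast
qed

lemma tdeg_add: "tdeg (p + q) \<le> max (tdeg p) (tdeg q)"
  unfolding tdeg_le_iff
proof
  fix a assume "a \<in> Poly_Mapping.keys (p + q)"
  then have "a \<in> Poly_Mapping.keys p \<or> a \<in> Poly_Mapping.keys q" using subsetD[OF keys_add[of p q]] by simp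
  then show "dg a \<le> max (tdeg p) (tdeg q)"
  proof
    assume "a \<in> Poly_Mapping.keys p" then have "dg a \<le> tdeg p" by (rule dg_le_tdeg)
    then show ?thesis by simp
  next
    assume "a \<in> Poly_Mapping.keys q" then have "dg a \<le> tdeg q" by (rule dg_le_tdeg)
    then show ?thesis by simp
  qed
qed

lemma tdeg_mult: "tdeg (p * q) \<le> tdeg p + tdeg q"
  unfolding tdeg_le_iff
proof
  fix a assume "a \<in> Poly_Mapping.keys (p * q)"
  then have "a \<in> {a + b |a b. a \<in> Poly_Mapping.keys p \<and> b \<in> Poly_Mapping.keys q}" by (rule subsetD[OF keys_mult])
  then obtain b c where "a = b + c" "b \<in> Poly_Mapping.keys p" "c \<in> Poly_Mapping.keys q" by blast
  then show "dg a \<le> tdeg p + tdeg q" using dg_le_tdeg[of b p] dg_le_tdeg[of c q] by (simp add: dg_add add_mono)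
qed

lemma keys_const_mult: "Poly_Mapping.keys (const_pol c * p) \<subseteq> Poly_Mapping.keys p"
proof
  fix k assume "k \<in> Poly_Mapping.keys (const_pol c * p)"
  then have "k \<in> {a + b |a b. a \<in> Poly_Mapping.keys (const_pol c) \<and> b \<in> Poly_Mapping.keys p}" by (rule subsetD[OF keys_mult])
  then obtain a b where "k = a + b" "a \<in> Poly_Mapping.keys (const_pol c)" "b \<in> Poly_Mapping.keys p" by blast
  moreover have "a = 0" using \<open>a \<in> _\<close> by (simp add: const_pol_def split: if_splits)
  ultimately show "k \<in> Poly_Mapping.keys p" by simp
qed

lemma tdeg_const_mult: "tdeg (const_pol c * p) \<le> tdeg p"
  unfolding tdeg_le_iff using keys_const_mult dg_le_tdeg by blast

lemma tdeg_single: "tdeg (Poly_Mapping.single a c) \<le> dg a"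
  unfolding tdeg_le_iff by auto

lemma tdeg_one[simp]: "tdeg 1 = 0"
  by (simp add: tdeg_dg)

lemma tdeg_const: "tdeg (const_pol c) = 0"
  using tdeg_single[of 0 c] by (simp add: const_pol_def)

lemma tdeg_uminus: "tdeg (- p) = tdeg p"
  by (simp add: tdeg_def keys_minus)

lemma mon_origin: "mon a origin = (if a = 0 then 1 else 0)"
proof (cases "a = 0")
  case False
  then obtain i where "Poly_Mapping.lookup a i \<noteq> 0" by (auto simp: poly_mapping_eq_iff fun_eq_iff)
  then show ?thesis using False by (auto simp: mon_def origin_def zero_power intro!: prod_zero)
qed (simp add: mon_def)

lemma peval_origin: "peval p origin = Poly_Mapping.lookup p 0"
proof -
  have "peval p origin = (\<Sum>a\<in>insert 0 (Poly_Mapping.keys p). Poly_Mapping.lookup p a * mon a origin)"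
    by (rule peval_superset) auto
  also have "\<dots> = Poly_Mapping.lookup p 0"
    by (simp add: mon_origin if_distrib sum.If_cases cong: if_cong)
  finally show ?thesis .
qed

definition high :: "nat \<Rightarrow> ('n::finite, 'k::field) mpol \<Rightarrow> bool" where
  "high N p \<longleftrightarrow> (\<forall>a\<in>Poly_Mapping.keys p. N \<le> dg a)"

lemma high_mult: "high a p \<Longrightarrow> high b q \<Longrightarrow> high (a + b) (p * q)"
  unfolding high_def
proof
  fix k assume h: "\<forall>a'\<in>Poly_Mapping.keys p. a \<le> dg a'" "\<forall>a\<in>Poly_Mapping.keys q. b \<le> dg a" and "k \<in> Poly_Mapping.keys (p * q)"
  from this(3) have "k \<in> {a + b |a b. a \<in> Poly_Mapping.keys p \<and> b \<in> Poly_Mapping.keys q}" by (rule subsetD[OF keys_mult])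
  then obtain u v where "k = u + v" "u \<in> Poly_Mapping.keys p" "v \<in> Poly_Mapping.keys q" by blast
  then show "a + b \<le> dg k" using h by (simp add: dg_add add_mono)
qed

lemma high_mono: "high a p \<Longrightarrow> b \<le> a \<Longrightarrow> high b p"
  unfolding high_def by auto

lemma high_0: "high 0 p" by (simp add: high_def)

lemma high_pow: "high 1 t \<Longrightarrow> high N (t ^ N)"
proof (induct N)
  case 0 then show ?case by (simp add: high_def)
next
  case (Suc N) then show ?case using high_mult[of 1 t N "t^N"] by simp
qed

lemma high_uminus: "high N p \<Longrightarrow> high N (- p)"
  by (simp add: high_def keys_minus)




inductive_set lc :: "('n::finite, 'k::field) mpol set \<Rightarrow> ('n, 'k) mpol set" for P where
  lc0: "0 \<in> lc P"
| lcS: "p \<in> P \<Longrightarrow> q \<in> lc P \<Longrightarrow> const_pol c * p + q \<in> lc P"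

lemma lc_base: "p \<in> P \<Longrightarrow> p \<in> lc P"
proof -
  assume "p \<in> P"
  then have "const_pol 1 * p + 0 \<in> lc P" by (rule lcS[OF _ lc0])
  then show ?thesis by simp
qed

lemma lc_add: "p \<in> lc P \<Longrightarrow> q \<in> lc P \<Longrightarrow> p + q \<in> lc P"
proof (induct p rule: lc.induct)
  case lc0 then show ?case by simp
next
  case (lcS p r c)
  then show ?case using lc.lcS[of p P "r + q" c] by (simp add: add.assoc)
qed

lemma lc_smul: "p \<in> lc P \<Longrightarrow> const_pol c * p \<in> lc P"
proof (induct p rule: lc.induct)
  case lc0 then show ?case by (simp add: lc.lc0)
next
  case (lcS p r d)
  have "const_pol c * (const_pol d * p + r) = const_pol (c * d) * p + const_pol c * r"
    by (simp add: algebra_simps const_pol_mult[symmetric])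
  then show ?case using lcS lc.lcS by metis
qed

lemma const_pol_minus_one: "const_pol (-1) * p = - p"
proof -
  have "const_pol (-1) * p + p = (const_pol (-1) + const_pol 1) * p" by (simp add: distrib_right)
  also have "\<dots> = 0" by (simp only: const_pol_add[symmetric]) simp
  finally have "const_pol (-1) * p + p = 0" .
  then show ?thesis by (simp add: eq_neg_iff_add_eq_0)
qed

lemma lc_uminus: "p \<in> lc P \<Longrightarrow> - p \<in> lc P"
  using lc_smul[of p P "-1"] by (simp add: const_pol_minus_one)

lemma lc_diff: "p \<in> lc P \<Longrightarrow> q \<in> lc P \<Longrightarrow> p - q \<in> lc P"
  using lc_add[of p P "-q", OF _ lc_uminus] by simp

lemma lc_sum: "finite S \<Longrightarrow> (\<And>s. s \<in> S \<Longrightarrow> f s \<in> lc P) \<Longrightarrow> (\<Sum>s\<in>S. f s) \<in> lc P"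
  by (induct S rule: finite_induct) (auto intro: lc0 lc_add)

lemma lc_mono: "p \<in> lc P \<Longrightarrow> P \<subseteq> Q \<Longrightarrow> p \<in> lc Q"
  by (induct p rule: lc.induct) (auto intro: lc.intros)

lemma lc_lc: "p \<in> lc (lc P) \<Longrightarrow> p \<in> lc P"
  by (induct p rule: lc.induct) (auto intro: lc0 lc_add lc_smul)

lemma lc_sub: "p \<in> lc Q \<Longrightarrow> Q \<subseteq> lc P \<Longrightarrow> p \<in> lc P"
  using lc_lc lc_mono by blast

definition pm :: "('n::finite, 'k::field) mpol set \<Rightarrow> ('n, 'k) mpol set \<Rightarrow> ('n, 'k) mpol set" where
  "pm P Q = {p * q | p q. p \<in> P \<and> q \<in> Q}"

lemma pmI: "p \<in> P \<Longrightarrow> q \<in> Q \<Longrightarrow> p * q \<in> pm P Q"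
  unfolding pm_def by blast

lemma pmE: "x \<in> pm P Q \<Longrightarrow> (\<And>p q. x = p * q \<Longrightarrow> p \<in> P \<Longrightarrow> q \<in> Q \<Longrightarrow> R) \<Longrightarrow> R"
  unfolding pm_def by blast

lemma lc_mult_base: "q \<in> lc Q \<Longrightarrow> p \<in> P \<Longrightarrow> p * q \<in> lc (pm P Q)"
proof (induct q rule: lc.induct)
  case lc0 then show ?case by (simp add: lc.lc0)
next
  case (lcS q r c)
  have "p * (const_pol c * q + r) = const_pol c * (p * q) + p * r" by (simp add: algebra_simps)
  then show ?case using lcS lc.lcS[of "p*q" "pm P Q" "p * r" c] pmI by metis
qed

lemma lc_mult: "p \<in> lc P \<Longrightarrow> q \<in> lc Q \<Longrightarrow> p * q \<in> lc (pm P Q)"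
proof (induct p rule: lc.induct)
  case lc0 then show ?case by (simp add: lc.lc0)
next
  case (lcS p r c)
  have "(const_pol c * p + r) * q = const_pol c * (p * q) + r * q" by (simp add: algebra_simps)
  then show ?case using lcS lc_mult_base[of q Q p P] lc_smul lc_add by metis
qed

lemma pm_mono: "P \<subseteq> P' \<Longrightarrow> Q \<subseteq> Q' \<Longrightarrow> pm P Q \<subseteq> pm P' Q'"
  unfolding pm_def by blast

lemma pm_assoc: "pm (pm P Q) R = pm P (pm Q R)"
  unfolding pm_def by (auto simp: mult.assoc) (metis mult.assoc)+

lemma pm_comm: "pm P Q = pm Q P"
  unfolding pm_def by (auto, metis mult.commute, metis mult.commute)




lemma zero_set_Int: "zero_set S \<inter> zero_set T = zero_set (S \<union> T)"
  unfolding zero_set_def by auto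

lemma zclosed_Int: "zclosed A \<Longrightarrow> zclosed B \<Longrightarrow> zclosed (A \<inter> B)"
  unfolding zclosed_def using zero_set_Int by metis

lemma zclosed_Z: "zclosed {x. peval f x = 0}"
  unfolding zclosed_def zero_set_def by (rule exI[of _ "{f}"]) auto

definition irr :: "('n::finite \<Rightarrow> 'k::field) set \<Rightarrow> bool" where
  "irr S \<longleftrightarrow> S \<noteq> {} \<and> (\<forall>A B. zclosed A \<longrightarrow> zclosed B \<longrightarrow> S \<subseteq> A \<union> B \<longrightarrow> S \<subseteq> A \<or> S \<subseteq> B)"

lemma zirred_irr: "zirred Y \<Longrightarrow> irr Y"
  unfolding irr_def
proof (intro conjI allI impI)
  assume z: "zirred Y"
  then show "Y \<noteq> {}" by (simp add: zirred_def)
  fix A B :: "('a \<Rightarrow> 'b) set" assume A: "zclosed A" and B: "zclosed B" and sub: "Y \<subseteq> A \<union> B"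
  have "zclosed (Y \<inter> A)" "zclosed (Y \<inter> B)" using z A B zclosed_Int by (auto simp: zirred_def)
  moreover have "Y = (Y \<inter> A) \<union> (Y \<inter> B)" using sub by blast
  ultimately have "Y = Y \<inter> A \<or> Y = Y \<inter> B" using z unfolding zirred_def by blast
  then show "Y \<subseteq> A \<or> Y \<subseteq> B" by blast
qed

lemma irr_zirred: "zclosed Y \<Longrightarrow> irr Y \<Longrightarrow> zirred Y"
  unfolding irr_def zirred_def by (metis Un_upper1 Un_upper2 equalityI order_refl)

definition cl :: "('n::finite \<Rightarrow> 'k::field) set \<Rightarrow> ('n \<Rightarrow> 'k) set" where
  "cl S = zero_set {f. \<forall>y\<in>S. peval f y = 0}"

lemma cl_sub: "S \<subseteq> cl S"
  unfolding cl_def zero_set_def by auto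

lemma cl_closed: "zclosed (cl S)"
  unfolding cl_def zclosed_def by blast

lemma cl_min: "zclosed C \<Longrightarrow> S \<subseteq> C \<Longrightarrow> cl S \<subseteq> C"
  unfolding cl_def zclosed_def zero_set_def by blast

lemma irr_cl: "irr S \<Longrightarrow> irr (cl S)"
  unfolding irr_def
proof (intro conjI allI impI)
  assume h: "S \<noteq> {} \<and> (\<forall>A B. zclosed A \<longrightarrow> zclosed B \<longrightarrow> S \<subseteq> A \<union> B \<longrightarrow> S \<subseteq> A \<or> S \<subseteq> B)"
  then show "cl S \<noteq> {}" using cl_sub by blast
  fix A B :: "('a \<Rightarrow> 'b) set" assume A: "zclosed A" and B: "zclosed B" and sub: "cl S \<subseteq> A \<union> B"
  then have "S \<subseteq> A \<union> B" using cl_sub by blast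
  then have "S \<subseteq> A \<or> S \<subseteq> B" using h A B by blast
  then show "cl S \<subseteq> A \<or> cl S \<subseteq> B" using cl_min A B by blast
qed

lemma irr_chain_union:
  assumes ch: "subset.chain UNIV C" and irrC: "\<And>c. c \<in> C \<Longrightarrow> irr c" and x: "\<And>c. c \<in> C \<Longrightarrow> x \<in> c"
  shows "irr (insert x (\<Union>C))"
  unfolding irr_def
proof (intro conjI allI impI)
  show "insert x (\<Union>C) \<noteq> {}" by simp
  fix A B :: "('a \<Rightarrow> 'b) set" assume A: "zclosed A" and B: "zclosed B" and sub: "insert x (\<Union>C) \<subseteq> A \<union> B"
  show "insert x (\<Union>C) \<subseteq> A \<or> insert x (\<Union>C) \<subseteq> B"
  proof (cases "\<forall>c\<in>C. c \<subseteq> A")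
    case True
    show ?thesis
    proof (cases "x \<in> A")
      case True then show ?thesis using \<open>\<forall>c\<in>C. c \<subseteq> A\<close> by blast
    next
      case False
      then have "C = {}" using True x by blast
      then show ?thesis using sub by blast
    qed
  next
    case False
    then obtain c1 where c1: "c1 \<in> C" "\<not> c1 \<subseteq> A" by blast
    have c1B: "c1 \<subseteq> B" using irrC[OF c1(1)] sub c1 A B unfolding irr_def by blast
    have "c \<subseteq> B" if "c \<in> C" for c
    proof -
      have "c \<subseteq> A \<or> c \<subseteq> B" using irrC[OF that] sub that A B unfolding irr_def by blast
      moreover have "c \<subseteq> c1 \<or> c1 \<subseteq> c" using ch that c1(1) unfolding subset.chain_def by blast
      ultimately show ?thesis using c1 c1B by blast
    qed
    moreover have "x \<in> B" using x[OF c1(1)] c1B by blast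
    ultimately show ?thesis by blast
  qed
qed

lemma component_exists:
  assumes X: "zclosed X" and x: "x \<in> X"
  shows "\<exists>Y. zcomponent X Y \<and> x \<in> Y"
proof -
  let ?A = "{Y. zirred Y \<and> x \<in> Y \<and> Y \<subseteq> X}"
  have "\<exists>M\<in>?A. \<forall>Z\<in>?A. M \<subseteq> Z \<longrightarrow> Z = M"
  proof (rule Zorn_Lemma2, intro ballI)
    fix C assume "C \<in> chains ?A"
    then have CA: "C \<subseteq> ?A" and ch0: "chain\<^sub>\<subseteq> C"
      unfolding chains_def by auto
    have ch: "subset.chain UNIV C" using ch0 unfolding subset.chain_def chain_subset_def by auto
    let ?U = "cl (insert x (\<Union>C))"
    have i1: "\<And>c. c \<in> C \<Longrightarrow> irr c"
    proof -
      fix c assume "c \<in> C" then have "zirred c" using CA by auto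
      then show "irr c" by (rule zirred_irr)
    qed
    have i2: "\<And>c. c \<in> C \<Longrightarrow> x \<in> c" using CA by auto
    have "irr (insert x (\<Union>C))"
      by (rule irr_chain_union[OF ch i1 i2])
    then have "irr ?U" by (rule irr_cl)
    then have "zirred ?U" by (rule irr_zirred[OF cl_closed])
    moreover have "insert x (\<Union>C) \<subseteq> X" using CA x by auto
    then have "?U \<subseteq> X" by (rule cl_min[OF X])
    moreover have "x \<in> ?U" using cl_sub[of "insert x (\<Union>C)"] by auto
    ultimately have "?U \<in> ?A" by simp
    moreover have "\<forall>Z\<in>C. Z \<subseteq> ?U" using cl_sub[of "insert x (\<Union>C)"] by auto
    ultimately show "\<exists>U\<in>?A. \<forall>Z\<in>C. Z \<subseteq> U" by blast
  qed
  then obtain M where M: "M \<in> ?A" "\<forall>Z\<in>?A. M \<subseteq> Z \<longrightarrow> Z = M" by auto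
  have "zcomponent X M" unfolding zcomponent_def
  proof (intro conjI allI impI)
    show "zirred M" "M \<subseteq> X" using M by auto
    fix Z assume "zirred Z" "M \<subseteq> Z" "Z \<subseteq> X"
    then show "Z = M" using M by auto
  qed
  then show ?thesis using M by auto
qed

definition compnz :: "('n::finite \<Rightarrow> 'k::field) set \<Rightarrow> ('n, 'k) mpol \<Rightarrow> bool" where
  "compnz X g \<longleftrightarrow> (\<forall>Y. zcomponent X Y \<longrightarrow> \<not> (\<forall>y\<in>Y. peval g y = 0))"

lemma irr_split:
  assumes "zirred Y" "\<forall>y\<in>Y. peval g y * peval h y = 0" "\<not> (\<forall>y\<in>Y. peval g y = 0)"
  shows "\<forall>y\<in>Y. peval h y = 0"
proof -
  have "Y \<subseteq> {y. peval g y = 0} \<union> {y. peval h y = 0}" using assms(2) by auto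
  then have "Y \<subseteq> {y. peval g y = 0} \<or> Y \<subseteq> {y. peval h y = 0}"
    using zirred_irr[OF assms(1)] zclosed_Z unfolding irr_def by blast
  then show ?thesis using assms(3) by blast
qed

lemma compnz_mult: "compnz X g \<Longrightarrow> compnz X h \<Longrightarrow> compnz X (g * h)"
  unfolding compnz_def
proof (intro allI impI notI)
  fix Y assume g: "\<forall>Y. zcomponent X Y \<longrightarrow> \<not> (\<forall>y\<in>Y. peval g y = 0)"
    and h: "\<forall>Y. zcomponent X Y \<longrightarrow> \<not> (\<forall>y\<in>Y. peval h y = 0)"
    and Y: "zcomponent X Y" and z: "\<forall>y\<in>Y. peval (g * h) y = 0"
  have "\<forall>y\<in>Y. peval h y = 0"
    by (rule irr_split) (use Y g z in \<open>auto simp: zcomponent_def peval_mult\<close>)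
  then show False using h Y by blast
qed

lemma ND:
  assumes X: "zclosed X" and g: "compnz X g" and gh: "\<forall>x\<in>X. peval g x * peval h x = 0" and x: "x \<in> X"
  shows "peval h x = 0"
proof -
  obtain Y where Y: "zcomponent X Y" "x \<in> Y" using component_exists[OF X x] by blast
  have "\<forall>y\<in>Y. peval h y = 0"
    by (rule irr_split) (use Y g gh in \<open>auto simp: zcomponent_def compnz_def\<close>)
  then show ?thesis using Y by blast
qed

lemma compnz_one: "compnz X 1"
  unfolding compnz_def zcomponent_def zirred_def by auto

lemma rat_elem_compnz: "rat_elem X p \<longleftrightarrow> compnz X (snd p)"
  by (simp add: rat_elem_def compnz_def)




definition eqX :: "('n::finite \<Rightarrow> 'k::field) set \<Rightarrow> ('n, 'k) mpol \<Rightarrow> ('n, 'k) mpol \<Rightarrow> bool" where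
  "eqX X f g \<longleftrightarrow> (\<forall>x\<in>X. peval f x = peval g x)"

definition lcX :: "('n::finite \<Rightarrow> 'k::field) set \<Rightarrow> ('n, 'k) mpol set \<Rightarrow> ('n, 'k) mpol set" where
  "lcX X Q = {p. \<exists>f\<in>lc Q. eqX X p f}"

definition RR :: "('n::finite \<Rightarrow> 'k::field) set \<Rightarrow> ('n, 'k) mpol set \<Rightarrow> ('n, 'k) frac set" where
  "RR X P = {q. rat_elem X q \<and> (\<exists>f\<in>lc P. rat_eq_on X (f, 1) q)}"

lemma rat_elem_add: "rat_elem X p \<Longrightarrow> rat_elem X q \<Longrightarrow> rat_elem X (frac_add p q)"
  by (simp add: rat_elem_compnz frac_add_def compnz_mult)

lemma rat_elem_mul: "rat_elem X p \<Longrightarrow> rat_elem X q \<Longrightarrow> rat_elem X (frac_mul p q)"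
  by (simp add: rat_elem_compnz frac_mul_def compnz_mult)

lemma rat_elem_pol: "rat_elem X (f, 1)"
  by (simp add: rat_elem_compnz compnz_one)

lemma rat_eq_pol: "rat_eq_on X (f, 1) q \<longleftrightarrow> (\<forall>x\<in>X. peval f x * peval (snd q) x = peval (fst q) x)"
  by (simp add: rat_eq_on_def)

lemma RR_rsub:
  assumes X: "zclosed X"
  shows "rsub X (RR X P)"
  unfolding rsub_def
proof (intro conjI ballI allI impI)
  show "RR X P \<subseteq> {p. rat_elem X p}" by (auto simp: RR_def)
  have "0 \<in> lc P" by (rule lc0)
  then show "(0, 1) \<in> RR X P" unfolding RR_def rat_eq_on_def by (auto simp: rat_elem_pol intro!: bexI[of _ 0])
next
  fix p q assume p: "p \<in> RR X P" and q: "rat_elem X q" and pq: "rat_eq_on X p q"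
  from p obtain f where f: "f \<in> lc P" "\<forall>x\<in>X. peval f x * peval (snd p) x = peval (fst p) x"
    and pe: "rat_elem X p" by (auto simp: RR_def rat_eq_pol)
  have "peval (f * snd q - fst q) x = 0" if x: "x \<in> X" for x
  proof (rule ND[OF X _ _ x])
    show "compnz X (snd p)" using pe by (simp add: rat_elem_compnz)
    show "\<forall>x\<in>X. peval (snd p) x * peval (f * snd q - fst q) x = 0"
    proof
      fix y assume y: "y \<in> X"
      have e1: "peval f y * peval (snd p) y = peval (fst p) y" using f y by blast
      have e2: "peval (fst p) y * peval (snd q) y = peval (fst q) y * peval (snd p) y"
        using pq y by (simp add: rat_eq_on_def)
      have "peval (snd p) y * peval (f * snd q - fst q) y
          = (peval f y * peval (snd p) y) * peval (snd q) y - peval (fst q) y * peval (snd p) y"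
        by (simp add: peval_diff peval_mult algebra_simps)
      also have "\<dots> = 0" using e1 e2 by simp
      finally show "peval (snd p) y * peval (f * snd q - fst q) y = 0" .
    qed
  qed
  then have "rat_eq_on X (f, 1) q" by (simp add: rat_eq_pol peval_diff peval_mult)
  then show "q \<in> RR X P" using f q by (auto simp: RR_def)
next
  fix p q assume p: "p \<in> RR X P" and q: "q \<in> RR X P"
  from p obtain f where f: "f \<in> lc P" "\<forall>x\<in>X. peval f x * peval (snd p) x = peval (fst p) x"
    and pe: "rat_elem X p" by (auto simp: RR_def rat_eq_pol)
  from q obtain g where g: "g \<in> lc P" "\<forall>x\<in>X. peval g x * peval (snd q) x = peval (fst q) x"
    and qe: "rat_elem X q" by (auto simp: RR_def rat_eq_pol)
  have "rat_eq_on X (f + g, 1) (frac_add p q)"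
    unfolding rat_eq_pol
  proof
    fix x assume x: "x \<in> X"
    have "peval (f + g) x * peval (snd (frac_add p q)) x
      = (peval f x * peval (snd p) x) * peval (snd q) x + (peval g x * peval (snd q) x) * peval (snd p) x"
      by (simp add: frac_add_def peval_add peval_mult algebra_simps)
    also have "\<dots> = peval (fst (frac_add p q)) x"
      using f g x by (simp add: frac_add_def peval_add peval_mult)
    finally show "peval (f + g) x * peval (snd (frac_add p q)) x = peval (fst (frac_add p q)) x" .
  qed
  then show "frac_add p q \<in> RR X P" unfolding RR_def using lc_add[OF f(1) g(1)] rat_elem_add[OF pe qe] by blast
next
  fix p c assume p: "p \<in> RR X P"
  from p obtain f where f: "f \<in> lc P" "\<forall>x\<in>X. peval f x * peval (snd p) x = peval (fst p) x"
    and pe: "rat_elem X p" by (auto simp: RR_def rat_eq_pol)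
  have "rat_eq_on X (const_pol c * f, 1) (frac_mul (const_pol c, 1) p)"
    unfolding rat_eq_pol
  proof
    fix x assume x: "x \<in> X"
    show "peval (const_pol c * f) x * peval (snd (frac_mul (const_pol c, 1) p)) x = peval (fst (frac_mul (const_pol c, 1) p)) x"
      using f x by (simp add: frac_mul_def peval_mult mult.assoc)
  qed
  then show "frac_mul (const_pol c, 1) p \<in> RR X P" unfolding RR_def using lc_smul[OF f(1)] rat_elem_mul[OF rat_elem_pol pe] by blast
qed

lemma RR_gen: "frac_of_pol ` P \<subseteq> RR X P"
  by (auto simp: RR_def frac_of_pol_def rat_elem_pol rat_eq_on_def intro: lc_base)

lemma RR_min:
  assumes L: "rsub X L" and G: "frac_of_pol ` P \<subseteq> L"
  shows "RR X P \<subseteq> L"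
proof -
  have "(f, 1) \<in> L" if "f \<in> lc P" for f
    using that
  proof (induct f rule: lc.induct)
    case lc0 then show ?case using L by (simp add: rsub_def)
  next
    case (lcS p r c)
    have "(p, 1) \<in> L" using G lcS(1) by (auto simp: frac_of_pol_def)
    then have "frac_mul (const_pol c, 1) (p, 1) \<in> L" using L by (simp add: rsub_def)
    then have "frac_add (frac_mul (const_pol c, 1) (p, 1)) (r, 1) \<in> L" using L lcS(3) by (simp add: rsub_def)
    then show ?case by (simp add: frac_add_def frac_mul_def)
  qed
  then show ?thesis using L unfolding RR_def rsub_def by blast
qed

lemma rspan_eqI:
  assumes "rsub X L" "G \<subseteq> L" "\<And>L'. rsub X L' \<Longrightarrow> G \<subseteq> L' \<Longrightarrow> L \<subseteq> L'"
  shows "rspan X G = L"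
  unfolding rspan_def using assms by blast

lemma rsub_of_pols_RR: assumes "zclosed X" shows "rsub_of_pols X P = RR X P"
  unfolding rsub_of_pols_def
  apply (rule rspan_eqI)
    apply (rule RR_rsub[OF assms])
   apply (rule RR_gen)
  apply (erule (1) RR_min)
  done

lemma RR_prod_mem:
  assumes a: "a \<in> RR X P" and b: "b \<in> RR X Q"
  shows "frac_mul a b \<in> RR X (pm P Q)"
proof -
    from a obtain f where f: "f \<in> lc P" "\<forall>x\<in>X. peval f x * peval (snd a) x = peval (fst a) x"
      and ae: "rat_elem X a" by (auto simp: RR_def rat_eq_pol)
    from b obtain g where g: "g \<in> lc Q" "\<forall>x\<in>X. peval g x * peval (snd b) x = peval (fst b) x"
      and be: "rat_elem X b" by (auto simp: RR_def rat_eq_pol)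
    have "rat_eq_on X (f * g, 1) (frac_mul a b)"
      unfolding rat_eq_pol
    proof
      fix x assume x: "x \<in> X"
      have "peval (f * g) x * peval (snd (frac_mul a b)) x = (peval f x * peval (snd a) x) * (peval g x * peval (snd b) x)"
        by (simp add: frac_mul_def peval_mult algebra_simps)
      also have "\<dots> = peval (fst (frac_mul a b)) x" using f g x by (simp add: frac_mul_def peval_mult)
      finally show "peval (f * g) x * peval (snd (frac_mul a b)) x = peval (fst (frac_mul a b)) x" .
    qed
    then show "frac_mul a b \<in> RR X (pm P Q)"
      unfolding RR_def using lc_mult[OF f(1) g(1)] rat_elem_mul[OF ae be] by blast
qed

lemma KX_mul_RR:
  assumes X: "zclosed X"
  shows "KX_mul X (RR X P) (RR X Q) = RR X (pm P Q)"
  unfolding KX_mul_def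
proof (rule rspan_eqI[OF RR_rsub[OF X]])
  show "{frac_mul p q |p q. p \<in> RR X P \<and> q \<in> RR X Q} \<subseteq> RR X (pm P Q)"
    using RR_prod_mem by fastforce
next
  fix L' assume L': "rsub X L'" and G: "{frac_mul p q |p q. p \<in> RR X P \<and> q \<in> RR X Q} \<subseteq> L'"
  show "RR X (pm P Q) \<subseteq> L'"
  proof (rule RR_min[OF L'], rule subsetI)
    fix y assume "y \<in> frac_of_pol ` pm P Q"
    then obtain x where x: "y = frac_of_pol x" "x \<in> pm P Q" by blast
    from x(2) obtain p q where pq: "x = p * q" "p \<in> P" "q \<in> Q" by (rule pmE)
    have "(p, 1) \<in> RR X P" "(q, 1) \<in> RR X Q" using RR_gen pq by (auto simp: frac_of_pol_def)
    then have "frac_mul (p, 1) (q, 1) \<in> L'" using G by blast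
    then show "y \<in> L'" using pq x(1) by (simp add: frac_mul_def frac_of_pol_def)
  qed
qed

lemma lcX_lc: "f \<in> lc P \<Longrightarrow> P \<subseteq> lcX X Q \<Longrightarrow> f \<in> lcX X Q"
proof (induct f rule: lc.induct)
  case lc0
  have "0 \<in> lc Q" by (rule lc.lc0)
  then show ?case unfolding lcX_def eqX_def by (auto intro!: bexI[of _ 0])
next
  case (lcS p r c)
  obtain fp where fp: "fp \<in> lc Q" "eqX X p fp" using lcS by (auto simp: lcX_def)
  obtain fr where fr: "fr \<in> lc Q" "eqX X r fr" using lcS by (auto simp: lcX_def)
  have "const_pol c * fp + fr \<in> lc Q" using fp fr lc_add lc_smul by blast
  moreover have "eqX X (const_pol c * p + r) (const_pol c * fp + fr)"
    using fp fr by (simp add: eqX_def peval_add peval_mult)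
  ultimately show ?case by (auto simp: lcX_def)
qed

lemma RR_mono:
  assumes "P \<subseteq> lcX X Q"
  shows "RR X P \<subseteq> RR X Q"
proof
  fix q assume "q \<in> RR X P"
  then obtain f where f: "f \<in> lc P" "rat_eq_on X (f, 1) q" and qe: "rat_elem X q" by (auto simp: RR_def)
  obtain g where g: "g \<in> lc Q" "eqX X f g" using lcX_lc[OF f(1) assms] by (auto simp: lcX_def)
  have "rat_eq_on X (g, 1) q" using f(2) g(2) by (simp add: rat_eq_on_def eqX_def)
  then show "q \<in> RR X Q" using g qe by (auto simp: RR_def)
qed

lemma lcX_base: "f \<in> lc Q \<Longrightarrow> f \<in> lcX X Q"
  by (auto simp: lcX_def eqX_def)

lemma lcX_eq: "eqX X p f \<Longrightarrow> f \<in> lcX X Q \<Longrightarrow> p \<in> lcX X Q"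
  by (auto simp: lcX_def eqX_def)

lemma KX_eq_refl: "KX_eq X L L"
  by (auto simp: KX_eq_def rat_eq_on_def mult.commute)




lemma loc_elem_pol: "loc_elem (f, 1)" by (simp add: loc_elem_def)

lemma li_polmul: "loc_ideal X I \<Longrightarrow> (u, 1) \<in> I \<Longrightarrow> (c * u, 1) \<in> I"
proof -
  assume I: "loc_ideal X I" and u: "(u, 1) \<in> I"
  then have "frac_mul (c, 1) (u, 1) \<in> I" using loc_elem_pol unfolding loc_ideal_def by blast
  then show ?thesis by (simp add: frac_mul_def)
qed

lemma li_add: "loc_ideal X I \<Longrightarrow> (u, 1) \<in> I \<Longrightarrow> (w, 1) \<in> I \<Longrightarrow> (u + w, 1) \<in> I"
proof -
  assume I: "loc_ideal X I" and u: "(u, 1) \<in> I" and w: "(w, 1) \<in> I"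
  then have "frac_add (u, 1) (w, 1) \<in> I" unfolding loc_ideal_def by blast
  then show ?thesis by (simp add: frac_add_def)
qed

lemma li_zero: "loc_ideal X I \<Longrightarrow> (0, 1) \<in> I"
  by (simp add: loc_ideal_def)

lemma li_uminus: "loc_ideal X I \<Longrightarrow> (u, 1) \<in> I \<Longrightarrow> (- u, 1) \<in> I"
  using li_polmul[of X I u "-1"] by simp

lemma li_diff: "loc_ideal X I \<Longrightarrow> (u, 1) \<in> I \<Longrightarrow> (w, 1) \<in> I \<Longrightarrow> (u - w, 1) \<in> I"
  using li_add[of X I u "-w"] li_uminus[of X I w] by simp

lemma li_sum:
  assumes I: "loc_ideal X I" shows "finite S \<Longrightarrow> (\<And>s. s \<in> S \<Longrightarrow> (f s, 1) \<in> I) \<Longrightarrow> ((\<Sum>s\<in>S. f s), 1) \<in> I"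
proof (induct S rule: finite_induct)
  case empty then show ?case using li_zero[OF I] by simp
next
  case (insert x F) then show ?case using li_add[OF I] by simp
qed

lemma li_num: "loc_ideal X I \<Longrightarrow> p \<in> I \<Longrightarrow> (fst p, 1) \<in> I"
proof -
  assume I: "loc_ideal X I" and p: "p \<in> I"
  then have "frac_mul (snd p, 1) p \<in> I" using loc_elem_pol unfolding loc_ideal_def by blast
  moreover have "loc_eq X (frac_mul (snd p, 1) p) (fst p, 1)"
    unfolding loc_eq_def by (rule exI[of _ 1]) (simp add: frac_mul_def peval_mult origin_def)
  ultimately show ?thesis using I loc_elem_pol unfolding loc_ideal_def by blast
qed

lemma loc_elem_mult: "loc_elem p \<Longrightarrow> loc_elem q \<Longrightarrow> loc_elem (snd p * snd q, 1) \<and> peval (snd p * snd q) origin \<noteq> 0"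
  by (simp add: loc_elem_def peval_mult)

lemma li_loc_ring: "loc_ideal X loc_ring"
  unfolding loc_ideal_def loc_ring_def
  by (auto simp: loc_elem_def frac_add_def frac_mul_def peval_mult)

lemma li_Inter: "\<F> \<noteq> {} \<Longrightarrow> (\<And>K. K \<in> \<F> \<Longrightarrow> loc_ideal X K) \<Longrightarrow> loc_ideal X (\<Inter>\<F>)"
  unfolding loc_ideal_def by blast

lemma li_prod: assumes "loc_ideal X I" "loc_ideal X J" shows "loc_ideal X (ideal_prod X I J)"
  unfolding ideal_prod_def
proof (rule li_Inter)
  show "{K. loc_ideal X K \<and> (\<forall>p\<in>I. \<forall>q\<in>J. frac_mul p q \<in> K)} \<noteq> {}"
  proof -
    have "loc_ring \<in> {K. loc_ideal X K \<and> (\<forall>p\<in>I. \<forall>q\<in>J. frac_mul p q \<in> K)}" 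
    proof (simp, intro conjI ballI)
      show "loc_ideal X loc_ring" by (rule li_loc_ring)
      fix p q assume "p \<in> I" "q \<in> J"
      then have "loc_elem p" "loc_elem q" using assms unfolding loc_ideal_def by auto
      then show "frac_mul p q \<in> loc_ring" by (simp add: loc_ring_def loc_elem_def frac_mul_def peval_mult)
    qed
    then show ?thesis by blast
  qed
qed auto

lemma prod_mem: "p \<in> I \<Longrightarrow> q \<in> J \<Longrightarrow> frac_mul p q \<in> ideal_prod X I J"
  unfolding ideal_prod_def by blast




lemma dg_single1: "dg (Poly_Mapping.single i (1::nat)) = 1"
proof -
  have "dg (Poly_Mapping.single i (1::nat)) = (\<Sum>j\<in>UNIV. if i = j then 1 else 0)"
    unfolding dg_def by (simp add: lookup_single when_def)
  also have "\<dots> = 1" by simp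
  finally show ?thesis .
qed

lemma exp_split: fixes a :: "'n \<Rightarrow>\<^sub>0 nat" assumes "0 < Poly_Mapping.lookup a i" shows "a = (a - Poly_Mapping.single i 1) + Poly_Mapping.single i 1"
proof (rule poly_mapping_eqI)
  fix k show "Poly_Mapping.lookup a k = Poly_Mapping.lookup (a - Poly_Mapping.single i 1 + Poly_Mapping.single i 1) k"
  proof (cases "k = i")
    case True then show ?thesis using assms by (simp add: lookup_add lookup_minus)
  next
    case False then show ?thesis by (simp add: lookup_add lookup_minus lookup_single_not_eq)
  qed
qed

lemma dg_pos_ex: "0 < dg a \<Longrightarrow> \<exists>i. 0 < Poly_Mapping.lookup a i"
  unfolding dg_def by (metis gr0I sum.neutral)

lemma exp_split_dg:
  assumes "0 < dg a"
  obtains b i where "a = b + Poly_Mapping.single i 1" "dg b + 1 = dg a"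
proof -
  obtain i where i: "0 < Poly_Mapping.lookup a i" using dg_pos_ex[OF assms] by blast
  let ?b = "a - Poly_Mapping.single i 1"
  have "a = ?b + Poly_Mapping.single i 1" by (rule exp_split[OF i])
  moreover then have "dg ?b + 1 = dg a" using dg_add[of ?b "Poly_Mapping.single i 1"] dg_single1[of i] by simp
  ultimately show ?thesis using that by blast
qed

lemma single_ne0: "Poly_Mapping.single i (1::nat) \<noteq> 0"
  by (metis lookup_single_eq lookup_zero one_neq_zero)

lemma var_loc_max: "(Poly_Mapping.single (Poly_Mapping.single i 1) (1::'k::field), 1) \<in> (loc_max :: ('n::finite, 'k) frac set)"
  unfolding loc_max_def using single_ne0[of i]
  by (simp add: loc_elem_def peval_origin lookup_single when_def)

lemma mono_pow: "k \<le> dg a \<Longrightarrow> (Poly_Mapping.single a (1::'k::field), 1) \<in> ideal_pow (X :: ('n::finite \<Rightarrow> 'k) set) loc_max k"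
proof (induct k arbitrary: a)
  case 0 then show ?case by (simp add: loc_ring_def loc_elem_def)
next
  case (Suc k)
  then have "0 < dg a" by simp
  then obtain b i where bi: "a = b + Poly_Mapping.single i 1" "dg b + 1 = dg a" by (rule exp_split_dg)
  then have "(Poly_Mapping.single b (1::'k), 1) \<in> ideal_pow X loc_max k" using Suc by simp
  then have "frac_mul (Poly_Mapping.single b (1::'k), 1) (Poly_Mapping.single (Poly_Mapping.single i 1) 1, 1) \<in> ideal_pow X loc_max (Suc k)"
    using var_loc_max prod_mem by (simp only: ideal_pow.simps) blast
  then show ?case using bi by (simp add: frac_mul_def mult_single)
qed

lemma mono_in_I:
  assumes I: "loc_ideal X I" and r: "ideal_pow X loc_max r \<subseteq> I" and a: "r \<le> dg a"
  shows "(Poly_Mapping.single a c, 1) \<in> I"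
proof -
  have "(Poly_Mapping.single a 1, 1) \<in> I" using mono_pow[OF a] r by blast
  then have "(const_pol c * Poly_Mapping.single a 1, 1) \<in> I" by (rule li_polmul[OF I])
  then show ?thesis by (simp add: const_pol_def mult_single)
qed

lemma Ipol_iff: "f \<in> Ipol I m \<longleftrightarrow> tdeg f \<le> m \<and> (f, 1) \<in> I"
  by (simp add: Ipol_def frac_of_pol_def)

lemma Apol_iff: "f \<in> Apol m \<longleftrightarrow> tdeg f \<le> m"
  by (simp add: Apol_def)

lemma Apol_mult: "p \<in> Apol b \<Longrightarrow> q \<in> Apol c \<Longrightarrow> p * q \<in> Apol (b + c)"
  unfolding Apol_iff using tdeg_mult[of p q] by simp

lemma Apol_mono: "b \<le> c \<Longrightarrow> Apol b \<subseteq> Apol c"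
  unfolding Apol_def by auto

lemma one_Apol: "1 \<in> Apol b" by (simp add: Apol_iff)

lemma pm_Apol: "pm (Apol b) (Apol c) \<subseteq> Apol (b + c)"
  using Apol_mult by (auto elim!: pmE)

lemma Ipol_mult: "loc_ideal X I \<Longrightarrow> u \<in> Ipol I a \<Longrightarrow> v \<in> Apol b \<Longrightarrow> u * v \<in> Ipol I (a + b)"
  unfolding Ipol_iff Apol_iff using tdeg_mult[of u v] li_polmul[of X I u v] by (simp add: mult.commute)

lemma keys_sum_single: "Poly_Mapping.keys (\<Sum>a\<in>S. Poly_Mapping.single a (g a)) \<subseteq> S"
  using keys_sum[of "\<lambda>a. Poly_Mapping.single a (g a)" S] by auto

lemma DR1:
  assumes I: "loc_ideal X I" and r: "ideal_pow X loc_max r \<subseteq> I" and d: "r \<le> d"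
    and f: "f \<in> Ipol I (Suc d)"
  shows "f \<in> lc (pm (Ipol I d) (Apol 1))"
proof -
  let ?K = "Poly_Mapping.keys f" and ?B = "{a. dg a = Suc d}"
  let ?s = "\<lambda>a. Poly_Mapping.single a (Poly_Mapping.lookup f a)"
  define h where "h = (\<Sum>a\<in>?K \<inter> ?B. ?s a)"
  define l where "l = (\<Sum>a\<in>?K - ?B. ?s a)"
  have fhl: "f = h + l" unfolding h_def l_def
    by (subst poly_sum_single[of f]) (rule sum.Int_Diff[OF finite_keys])
  have hI: "(h, 1) \<in> I" unfolding h_def
    by (rule li_sum[OF I]) (auto intro!: mono_in_I[OF I r] simp: d le_SucI)
  have fI: "(f, 1) \<in> I" "tdeg f \<le> Suc d" using f by (auto simp: Ipol_iff)
  have "l = f - h" using fhl by simp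
  then have lI: "(l, 1) \<in> I" using li_diff[OF I fI(1) hI] by simp
  have "tdeg l \<le> d" unfolding tdeg_le_iff
  proof
    fix a assume "a \<in> Poly_Mapping.keys l"
    then have "a \<in> ?K - ?B" unfolding l_def by (rule subsetD[OF keys_sum_single])
    then show "dg a \<le> d" using fI(2) dg_le_tdeg[of a f] by auto
  qed
  then have "l \<in> Ipol I d" using lI by (simp add: Ipol_iff)
  then have "l * 1 \<in> pm (Ipol I d) (Apol 1)" using one_Apol by (rule pmI)
  then have l_lc: "l \<in> lc (pm (Ipol I d) (Apol 1))" using lc_base[of "l * 1"] by simp
  have h_lc: "h \<in> lc (pm (Ipol I d) (Apol 1))" unfolding h_def
  proof (rule lc_sum)
    fix a assume a: "a \<in> ?K \<inter> ?B"
    then have "0 < dg a" by simp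
    then obtain b i where bi: "a = b + Poly_Mapping.single i 1" "dg b + 1 = dg a" by (rule exp_split_dg)
    have "dg b = d" using a bi by simp
    then have "Poly_Mapping.single b (Poly_Mapping.lookup f a) \<in> Ipol I d"
      using tdeg_single[of b] mono_in_I[OF I r, of b] d by (auto simp: Ipol_iff)
    moreover have "Poly_Mapping.single (Poly_Mapping.single i 1) (1::'b) \<in> Apol 1"
      using tdeg_single[of "Poly_Mapping.single i 1" 1] dg_single1[of i] by (simp add: Apol_iff)
    ultimately have "Poly_Mapping.single b (Poly_Mapping.lookup f a) * Poly_Mapping.single (Poly_Mapping.single i 1) 1
        \<in> pm (Ipol I d) (Apol 1)" by (rule pmI)
    then show "?s a \<in> lc (pm (Ipol I d) (Apol 1))" using bi(1) by (simp add: mult_single lc_base)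
  qed simp
  show ?thesis using fhl lc_add[OF h_lc l_lc] by simp
qed

lemma DR:
  assumes I: "loc_ideal X I" and r: "ideal_pow X loc_max r \<subseteq> I" and a: "r \<le> a"
  shows "f \<in> Ipol I (a + b) \<Longrightarrow> f \<in> lc (pm (Ipol I a) (Apol b))"
proof (induct b arbitrary: f)
  case 0
  then have "f * 1 \<in> pm (Ipol I a) (Apol 0)" using one_Apol by (intro pmI) simp_all
  then show ?case using lc_base[of "f * 1"] by simp
next
  case (Suc b)
  have "f \<in> lc (pm (Ipol I (a + b)) (Apol 1))"
    by (rule DR1[OF I r]) (use a Suc.prems in simp_all)
  moreover have "pm (Ipol I (a + b)) (Apol 1) \<subseteq> lc (pm (Ipol I a) (Apol (Suc b)))"
  proof
    fix x assume "x \<in> pm (Ipol I (a + b)) (Apol 1)"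
    then obtain u v where uv: "x = u * v" "u \<in> Ipol I (a + b)" "v \<in> Apol 1" by (rule pmE)
    have "u \<in> lc (pm (Ipol I a) (Apol b))" using Suc.hyps uv(2) by blast
    then have "u * v \<in> lc (pm (pm (Ipol I a) (Apol b)) (Apol 1))" using lc_base[OF uv(3)] by (rule lc_mult)
    moreover have "pm (pm (Ipol I a) (Apol b)) (Apol 1) \<subseteq> pm (Ipol I a) (Apol (Suc b))"
      unfolding pm_assoc using pm_mono[OF order_refl pm_Apol[of b 1]] by simp
    ultimately show "x \<in> lc (pm (Ipol I a) (Apol (Suc b)))" unfolding uv(1) by (rule lc_mono)
  qed
  ultimately show ?case by (rule lc_sub)
qed




lemma lookup_const_mult: "Poly_Mapping.lookup (const_pol c * p) k = c * Poly_Mapping.lookup p k"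
proof -
  have "const_pol c * p = Poly_Mapping.map ((*) c) p"
    by (simp add: const_pol_def mult_map_scale_conv_mult)
  then show ?thesis by (simp add: Poly_Mapping.map.rep_eq when_def)
qed

definition subsp :: "('n::finite, 'k::field) mpol set \<Rightarrow> bool" where
  "subsp P \<longleftrightarrow> (\<forall>p\<in>P. \<forall>q\<in>P. p + q \<in> P) \<and> (\<forall>p\<in>P. \<forall>c. const_pol c * p \<in> P)"

lemma FD_gen:
  assumes "finite M"
  shows "subsp P \<Longrightarrow> (\<forall>p\<in>P. Poly_Mapping.keys p \<subseteq> M) \<Longrightarrow> \<exists>F. finite F \<and> F \<subseteq> P \<and> P \<subseteq> lc F"
  using assms
proof (induct M arbitrary: P rule: finite_induct)
  case empty
  have "P \<subseteq> lc {}"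
  proof
    fix p assume "p \<in> P" then have "Poly_Mapping.keys p = {}" using empty by blast
    then have "p = 0" by simp
    then show "p \<in> lc {}" by (simp add: lc0)
  qed
  then show ?case by (intro exI[of _ "{}"]) simp
next
  case (insert a M)
  let ?P' = "{p\<in>P. Poly_Mapping.lookup p a = 0}"
  have sP1: "\<And>p q. p \<in> P \<Longrightarrow> q \<in> P \<Longrightarrow> p + q \<in> P" and sP2: "\<And>p c. p \<in> P \<Longrightarrow> const_pol c * p \<in> P"
    using insert(4) unfolding subsp_def by simp_all
  have s': "subsp ?P'" unfolding subsp_def
  proof (intro conjI ballI allI)
    fix p q assume "p \<in> ?P'" "q \<in> ?P'"
    then show "p + q \<in> ?P'" using sP1 by (simp add: lookup_add)
  next
    fix p c assume "p \<in> ?P'"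
    then show "const_pol c * p \<in> ?P'" using sP2 by (simp add: lookup_const_mult)
  qed
  have k': "\<forall>p\<in>?P'. Poly_Mapping.keys p \<subseteq> M"
  proof (intro ballI subsetI)
    fix p x assume p: "p \<in> ?P'" and x: "x \<in> Poly_Mapping.keys p"
    then have "Poly_Mapping.keys p \<subseteq> insert a M" using insert(5) p by simp
    then have "x \<in> insert a M" using x by (rule subsetD)
    moreover have "x \<noteq> a" using p x by (auto simp: in_keys_iff)
    ultimately show "x \<in> M" by simp
  qed
  from insert(3)[OF s' k'] obtain F' where F': "finite F'" "F' \<subseteq> ?P'" "?P' \<subseteq> lc F'" by (elim exE conjE)
  show ?case
  proof (cases "\<exists>p0\<in>P. Poly_Mapping.lookup p0 a \<noteq> 0")
    case False
    then have "P = ?P'" by auto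
    then show ?thesis using F' by (intro exI[of _ F']) simp
  next
    case True
    then obtain p0 where p0: "p0 \<in> P" "Poly_Mapping.lookup p0 a \<noteq> 0" by blast
    define p1 where "p1 = const_pol (1 / Poly_Mapping.lookup p0 a) * p0"
    have p1: "p1 \<in> P" "Poly_Mapping.lookup p1 a = 1"
      using p0 sP2 by (simp_all add: p1_def lookup_const_mult)
    have "P \<subseteq> lc (insert p1 F')"
    proof
      fix p assume p: "p \<in> P"
      define p' where "p' = p + const_pol (- Poly_Mapping.lookup p a) * p1"
      have "p' \<in> P" unfolding p'_def using sP1[OF p sP2[OF p1(1)]] .
      moreover have "Poly_Mapping.lookup p' a = 0" using p1(2) by (simp add: p'_def lookup_add lookup_const_mult)
      ultimately have "p' \<in> ?P'" by simp
      then have "p' \<in> lc F'" by (rule subsetD[OF F'(3)])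
      then have "p' \<in> lc (insert p1 F')" by (rule lc_mono) (rule subset_insertI)
      moreover have "const_pol (Poly_Mapping.lookup p a) * p1 \<in> lc (insert p1 F')"
        by (rule lc_smul[OF lc_base]) simp
      ultimately have "p' + const_pol (Poly_Mapping.lookup p a) * p1 \<in> lc (insert p1 F')" by (rule lc_add)
      moreover have "p' + const_pol (Poly_Mapping.lookup p a) * p1 = p"
      proof -
        have "p' + const_pol (Poly_Mapping.lookup p a) * p1 = p + (const_pol (- Poly_Mapping.lookup p a) + const_pol (Poly_Mapping.lookup p a)) * p1"
          unfolding p'_def by (simp only: add.assoc distrib_right)
        also have "const_pol (- Poly_Mapping.lookup p a) + const_pol (Poly_Mapping.lookup p a) = 0"
          by (simp only: const_pol_add[symmetric]) simp
        finally show ?thesis by simp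
      qed
      ultimately show "p \<in> lc (insert p1 F')" by simp
    qed
    moreover have "insert p1 F' \<subseteq> P" using F'(2) p1(1) by auto
    ultimately show ?thesis using F'(1) by (intro exI[of _ "insert p1 F'"]) simp
  qed
qed

lemma finite_dg: "finite {a :: 'n::finite \<Rightarrow>\<^sub>0 nat. dg a \<le> d}"
proof -
  let ?S = "{f :: 'n \<Rightarrow> nat. \<forall>x. (x \<in> UNIV \<longrightarrow> f x \<in> {..d}) \<and> (x \<notin> UNIV \<longrightarrow> f x = 0)}"
  have fS: "finite ?S" by (rule finite_set_of_finite_funs) auto
  have "Poly_Mapping.lookup ` {a :: 'n \<Rightarrow>\<^sub>0 nat. dg a \<le> d} \<subseteq> ?S"
  proof (rule image_subsetI)
    fix a :: "'n \<Rightarrow>\<^sub>0 nat" assume a: "a \<in> {a. dg a \<le> d}"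
    have "Poly_Mapping.lookup a x \<le> d" for x
    proof -
      have "Poly_Mapping.lookup a x \<le> dg a"
        unfolding dg_def by (rule member_le_sum[of x UNIV "Poly_Mapping.lookup a"]) auto
      then show ?thesis using a by simp
    qed
    then show "Poly_Mapping.lookup a \<in> ?S" by simp
  qed
  then have "finite (Poly_Mapping.lookup ` {a :: 'n \<Rightarrow>\<^sub>0 nat. dg a \<le> d})" using fS by (rule finite_subset)
  moreover have "inj_on Poly_Mapping.lookup {a :: 'n \<Rightarrow>\<^sub>0 nat. dg a \<le> d}"
    by (rule inj_onI, rule poly_mapping_eqI) simp
  ultimately show ?thesis by (rule finite_imageD)
qed

lemma FD:
  assumes "subsp P" "\<forall>p\<in>P. tdeg p \<le> d"
  shows "\<exists>F. finite F \<and> F \<subseteq> P \<and> P \<subseteq> lc F"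
proof (rule FD_gen[OF finite_dg assms(1)])
  show "\<forall>p\<in>P. Poly_Mapping.keys p \<subseteq> {a. dg a \<le> d}" using assms(2) by (auto simp: tdeg_le_iff)
qed

lemma subsp_Ipol: assumes I: "loc_ideal X I" shows "subsp (Ipol I m)"
  unfolding subsp_def
proof (intro conjI ballI allI)
  fix p q assume "p \<in> Ipol I m" "q \<in> Ipol I m"
  then show "p + q \<in> Ipol I m" using tdeg_add[of p q] li_add[OF I] by (auto simp: Ipol_iff)
next
  fix p c assume "p \<in> Ipol I m"
  then show "const_pol c * p \<in> Ipol I m" using tdeg_const_mult[of c p] li_polmul[OF I] by (auto simp: Ipol_iff)
qed

lemma subsp_Apol: "subsp (Apol m :: ('n::finite, 'k::field) mpol set)"
  unfolding subsp_def
proof (intro conjI ballI allI)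
  fix p q :: "('n, 'k) mpol" assume "p \<in> Apol m" "q \<in> Apol m"
  then show "p + q \<in> Apol m" using tdeg_add[of p q] by (auto simp: Apol_iff)
next
  fix p :: "('n, 'k) mpol" and c assume "p \<in> Apol m"
  then show "const_pol c * p \<in> Apol m" using tdeg_const_mult[of c p] by (auto simp: Apol_iff)
qed

lemma KX_RR:
  assumes X: "zclosed X" and F: "finite F" "F \<subseteq> P" "P \<subseteq> lc F"
    and nz: "\<forall>Y. zcomponent X Y \<longrightarrow> (\<exists>p\<in>P. \<exists>y\<in>Y. peval p y \<noteq> 0)"
  shows "KX X (RR X P)"
  unfolding KX_def
proof (intro conjI)
  show "rsub X (RR X P)" by (rule RR_rsub[OF X])
  have "RR X F = RR X P"
  proof
    show "RR X F \<subseteq> RR X P" by (rule RR_mono) (use F in \<open>auto intro: lcX_base lc_base\<close>)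
    show "RR X P \<subseteq> RR X F" by (rule RR_mono) (use F in \<open>auto intro: lcX_base\<close>)
  qed
  moreover have "rspan X (frac_of_pol ` F) = RR X F"
    using rsub_of_pols_RR[OF X, of F] by (simp add: rsub_of_pols_def)
  ultimately have "RR X P = rspan X (frac_of_pol ` F)" by simp
  moreover have "frac_of_pol ` F \<subseteq> RR X P" using RR_gen[of P X] F(2) by auto
  ultimately show "\<exists>G. finite G \<and> G \<subseteq> RR X P \<and> RR X P = rspan X G" using F(1) by blast
  show "\<forall>Y. zcomponent X Y \<longrightarrow> (\<exists>p\<in>RR X P. \<not> (\<forall>x\<in>Y. peval (fst p) x = 0))"
  proof (intro allI impI)
    fix Y assume "zcomponent X Y"
    then obtain p y where "p \<in> P" "y \<in> Y" "peval p y \<noteq> 0" using nz by blast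
    moreover then have "(p, 1) \<in> RR X P" using RR_gen[of P X] by (auto simp: frac_of_pol_def)
    ultimately show "\<exists>p\<in>RR X P. \<not> (\<forall>x\<in>Y. peval (fst p) x = 0)" by force
  qed
qed

lemma dg_single: "dg (Poly_Mapping.single i (k::nat)) = k"
proof -
  have "dg (Poly_Mapping.single i k) = (\<Sum>j\<in>UNIV. if i = j then k else 0)"
    unfolding dg_def by (simp add: lookup_single when_def)
  also have "\<dots> = k" by simp
  finally show ?thesis .
qed

lemma peval_var_pow: "peval (Poly_Mapping.single (Poly_Mapping.single i k) 1) y = y i ^ k"
proof -
  have "peval (Poly_Mapping.single (Poly_Mapping.single i k) 1) y = (\<Prod>j\<in>UNIV. if i = j then y j ^ k else 1)"
    by (simp add: peval_single mon_def lookup_single when_def if_distrib cong: if_cong)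
  also have "\<dots> = y i ^ k" by simp
  finally show ?thesis .
qed

lemma comp_point:
  assumes V: "affine_variety_equidim X n" and n: "n \<ge> 1" and Y: "zcomponent X Y"
  shows "\<exists>y\<in>Y. y \<noteq> origin"
proof -
  have "zdim_eq Y n" using V Y by (simp add: affine_variety_equidim_def)
  then obtain c where c: "\<forall>i\<le>n. zirred (c i)" "\<forall>i<n. c i \<subset> c (Suc i)" "c n = Y"
    by (auto simp: zdim_eq_def zchain_def)
  have nn: "Suc (n - 1) = n" "n - 1 < n" using n by auto
  have "c (n - 1) \<subset> c (Suc (n - 1))" using c(2) nn(2) by blast
  then have "c (n - 1) \<subset> Y" using nn(1) c(3) by simp
  moreover have "c (n - 1) \<noteq> {}" using c(1) by (auto simp: zirred_def)
  ultimately obtain z w where "z \<in> Y" "w \<in> Y" "z \<noteq> w" by blast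
  show ?thesis
  proof (cases "z = origin")
    case True then have "w \<noteq> origin" using \<open>z \<noteq> w\<close> by simp
    then show ?thesis using \<open>w \<in> Y\<close> by blast
  next
    case False then show ?thesis using \<open>z \<in> Y\<close> by blast
  qed
qed




inductive_set idl :: "('n::finite, 'k::field) mpol set \<Rightarrow> ('n, 'k) mpol set" for S where
  idl0: "0 \<in> idl S"
| idlS: "s \<in> S \<Longrightarrow> t \<in> idl S \<Longrightarrow> c * s + t \<in> idl S"

lemma idl_add: "p \<in> idl S \<Longrightarrow> q \<in> idl S \<Longrightarrow> p + q \<in> idl S"
proof (induct p rule: idl.induct)
  case idl0 then show ?case by simp
next
  case (idlS s t c)
  then show ?case using idl.idlS[of s S "t + q" c] by (simp add: add.assoc)
qed

lemma idl_mult: "p \<in> idl S \<Longrightarrow> c * p \<in> idl S"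
proof (induct p rule: idl.induct)
  case idl0 then show ?case by (simp add: idl.idl0)
next
  case (idlS s t d)
  have "c * (d * s + t) = (c * d) * s + c * t" by (simp add: algebra_simps)
  then show ?case using idlS idl.idlS by metis
qed

lemma idl_base: "s \<in> S \<Longrightarrow> s \<in> idl S"
proof -
  assume "s \<in> S"
  then have "1 * s + 0 \<in> idl S" by (rule idlS[OF _ idl0])
  then show ?thesis by simp
qed

definition IJp :: "('n::finite, 'k::field) frac set \<Rightarrow> ('n, 'k) frac set \<Rightarrow> ('n, 'k) mpol set" where
  "IJp I J = {u * w | u w. (u, 1) \<in> I \<and> (w, 1) \<in> J}"

definition TT :: "('n::finite \<Rightarrow> 'k::field) set \<Rightarrow> ('n, 'k) frac set \<Rightarrow> ('n, 'k) frac set \<Rightarrow> ('n, 'k) frac set" where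
  "TT X I J = {q. loc_elem q \<and> (\<exists>e v. peval e origin \<noteq> 0 \<and> v \<in> idl (IJp I J) \<and>
       (\<forall>x\<in>X. peval e x * peval (fst q) x = peval v x * peval (snd q) x))}"

lemma TT_li:
  assumes I: "loc_ideal X I" and J: "loc_ideal X J"
  shows "loc_ideal X (TT X I J)"
  unfolding loc_ideal_def
proof (intro conjI ballI allI impI)
  show "TT X I J \<subseteq> {p. loc_elem p}" by (auto simp: TT_def)
  have "(0::('a,'b) mpol) \<in> idl (IJp I J)" by (rule idl0)
  moreover have "peval (1::('a,'b) mpol) origin \<noteq> 0" by simp
  moreover have "\<forall>x\<in>X. peval (1::('a,'b) mpol) x * peval (fst ((0::('a,'b) mpol), (1::('a,'b) mpol))) x
      = peval 0 x * peval (snd ((0::('a,'b) mpol), (1::('a,'b) mpol))) x" by simp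
  moreover have "loc_elem ((0::('a,'b) mpol), (1::('a,'b) mpol))" by (simp add: loc_elem_def)
  ultimately show "(0, 1) \<in> TT X I J" unfolding TT_def by blast
next
  fix p q assume p: "p \<in> TT X I J" and q: "loc_elem q" and pq: "loc_eq X p q"
  from p obtain e v where ev: "peval e origin \<noteq> 0" "v \<in> idl (IJp I J)"
      "\<forall>x\<in>X. peval e x * peval (fst p) x = peval v x * peval (snd p) x" and pe: "loc_elem p"
    by (auto simp: TT_def)
  from pq obtain h where h: "peval h origin \<noteq> 0"
      "\<forall>x\<in>X. peval h x * (peval (fst p) x * peval (snd q) x - peval (fst q) x * peval (snd p) x) = 0"
    by (auto simp: loc_eq_def)
  let ?e = "h * e * snd p" and ?v = "(h * snd p) * v"
  have "peval ?e origin \<noteq> 0" using ev(1) h(1) pe by (simp add: peval_mult loc_elem_def)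
  moreover have "?v \<in> idl (IJp I J)" using ev(2) by (rule idl_mult)
  moreover have "\<forall>x\<in>X. peval ?e x * peval (fst q) x = peval ?v x * peval (snd q) x"
  proof
    fix x assume x: "x \<in> X"
    have a: "peval e x * peval (fst p) x = peval v x * peval (snd p) x" using ev(3) x by blast
    have b: "peval h x * (peval (fst p) x * peval (snd q) x) = peval h x * (peval (fst q) x * peval (snd p) x)"
      using h(2) x by (simp add: right_diff_distrib)
    have "peval ?e x * peval (fst q) x = peval e x * (peval h x * (peval (fst q) x * peval (snd p) x))"
      by (simp add: peval_mult mult_ac)
    also have "\<dots> = peval e x * (peval h x * (peval (fst p) x * peval (snd q) x))" by (simp only: b)
    also have "\<dots> = peval h x * peval (snd q) x * (peval e x * peval (fst p) x)" by (simp add: mult_ac)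
    also have "\<dots> = peval ?v x * peval (snd q) x" using a by (simp add: peval_mult mult_ac)
    finally show "peval ?e x * peval (fst q) x = peval ?v x * peval (snd q) x" .
  qed
  ultimately show "q \<in> TT X I J" using q unfolding TT_def by blast
next
  fix p q assume p: "p \<in> TT X I J" and q: "q \<in> TT X I J"
  from p obtain e1 v1 where ev1: "peval e1 origin \<noteq> 0" "v1 \<in> idl (IJp I J)"
      "\<forall>x\<in>X. peval e1 x * peval (fst p) x = peval v1 x * peval (snd p) x" and pe: "loc_elem p"
    by (auto simp: TT_def)
  from q obtain e2 v2 where ev2: "peval e2 origin \<noteq> 0" "v2 \<in> idl (IJp I J)"
      "\<forall>x\<in>X. peval e2 x * peval (fst q) x = peval v2 x * peval (snd q) x" and qe: "loc_elem q"
    by (auto simp: TT_def)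
  let ?e = "e1 * e2" and ?v = "e2 * v1 + e1 * v2"
  have "peval ?e origin \<noteq> 0" using ev1(1) ev2(1) by (simp add: peval_mult)
  moreover have "?v \<in> idl (IJp I J)" using idl_add idl_mult ev1(2) ev2(2) by blast
  moreover have "\<forall>x\<in>X. peval ?e x * peval (fst (frac_add p q)) x = peval ?v x * peval (snd (frac_add p q)) x"
  proof
    fix x assume x: "x \<in> X"
    have a: "peval e1 x * peval (fst p) x = peval v1 x * peval (snd p) x" using ev1(3) x by blast
    have b: "peval e2 x * peval (fst q) x = peval v2 x * peval (snd q) x" using ev2(3) x by blast
    have "peval ?e x * peval (fst (frac_add p q)) x
        = peval e2 x * peval (snd q) x * (peval e1 x * peval (fst p) x) + peval e1 x * peval (snd p) x * (peval e2 x * peval (fst q) x)"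
      by (simp add: frac_add_def peval_mult peval_add algebra_simps)
    also have "\<dots> = peval ?v x * peval (snd (frac_add p q)) x"
      unfolding a b by (simp add: frac_add_def peval_mult peval_add algebra_simps)
    finally show "peval ?e x * peval (fst (frac_add p q)) x = peval ?v x * peval (snd (frac_add p q)) x" .
  qed
  moreover have "loc_elem (frac_add p q)" using pe qe by (simp add: loc_elem_def frac_add_def peval_mult)
  ultimately show "frac_add p q \<in> TT X I J" unfolding TT_def by blast
next
  fix p and a :: "('a, 'b) frac" assume p: "p \<in> TT X I J" and a: "loc_elem a"
  from p obtain e v where ev: "peval e origin \<noteq> 0" "v \<in> idl (IJp I J)"
      "\<forall>x\<in>X. peval e x * peval (fst p) x = peval v x * peval (snd p) x" and pe: "loc_elem p"
    by (auto simp: TT_def)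
  let ?e = "e * snd a" and ?v = "fst a * v"
  have "peval ?e origin \<noteq> 0" using ev(1) a by (simp add: peval_mult loc_elem_def)
  moreover have "?v \<in> idl (IJp I J)" using ev(2) by (rule idl_mult)
  moreover have "\<forall>x\<in>X. peval ?e x * peval (fst (frac_mul a p)) x = peval ?v x * peval (snd (frac_mul a p)) x"
  proof
    fix x assume x: "x \<in> X"
    have b: "peval e x * peval (fst p) x = peval v x * peval (snd p) x" using ev(3) x by blast
    have "peval ?e x * peval (fst (frac_mul a p)) x = peval (snd a) x * peval (fst a) x * (peval e x * peval (fst p) x)"
      by (simp add: frac_mul_def peval_mult mult_ac)
    also have "\<dots> = peval ?v x * peval (snd (frac_mul a p)) x"
      unfolding b by (simp add: frac_mul_def peval_mult mult_ac)
    finally show "peval ?e x * peval (fst (frac_mul a p)) x = peval ?v x * peval (snd (frac_mul a p)) x" .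
  qed
  moreover have "loc_elem (frac_mul a p)" using pe a by (simp add: loc_elem_def frac_mul_def peval_mult)
  ultimately show "frac_mul a p \<in> TT X I J" unfolding TT_def by blast
qed

lemma TT_prod:
  assumes I: "loc_ideal X I" and J: "loc_ideal X J" and p: "p \<in> I" and q: "q \<in> J"
  shows "frac_mul p q \<in> TT X I J"
proof -
  have pI: "(fst p, 1) \<in> I" by (rule li_num[OF I p])
  have qJ: "(fst q, 1) \<in> J" by (rule li_num[OF J q])
  have pe: "loc_elem p" and qe: "loc_elem q" using I J p q unfolding loc_ideal_def by auto
  have "fst p * fst q \<in> IJp I J" using pI qJ unfolding IJp_def by blast
  then have v: "fst p * fst q \<in> idl (IJp I J)" by (rule idl_base)
  have "peval (snd p * snd q) origin \<noteq> 0" using pe qe by (simp add: loc_elem_def peval_mult)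
  moreover have "\<forall>x\<in>X. peval (snd p * snd q) x * peval (fst (frac_mul p q)) x = peval (fst p * fst q) x * peval (snd (frac_mul p q)) x"
    by (simp add: frac_mul_def peval_mult mult_ac)
  moreover have "loc_elem (frac_mul p q)" using pe qe by (simp add: loc_elem_def frac_mul_def peval_mult)
  ultimately show ?thesis unfolding TT_def using v by blast
qed

lemma prod_sub_TT:
  assumes I: "loc_ideal X I" and J: "loc_ideal X J"
  shows "ideal_prod X I J \<subseteq> TT X I J"
  unfolding ideal_prod_def using TT_li[OF I J] TT_prod[OF I J] by blast

lemma prod_char:
  assumes I: "loc_ideal X I" and J: "loc_ideal X J" and f: "(f, 1) \<in> ideal_prod X I J"
  shows "\<exists>e v. peval e origin \<noteq> 0 \<and> v \<in> idl (IJp I J) \<and> (\<forall>x\<in>X. peval e x * peval f x = peval v x)"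
proof -
  have "(f, 1) \<in> TT X I J" using prod_sub_TT[OF I J] f by blast
  then show ?thesis by (simp add: TT_def)
qed

lemma inverse_high:
  assumes e: "peval e origin \<noteq> 0"
  shows "\<exists>q \<epsilon>. e * q = 1 + \<epsilon> \<and> high N \<epsilon>"
proof -
  let ?e0 = "peval e origin"
  define t where "t = const_pol (1 / ?e0) * e - 1"
  have lt: "Poly_Mapping.lookup t 0 = 0"
    using e by (simp add: t_def lookup_minus lookup_const_mult peval_origin)
  have ht: "high 1 t" unfolding high_def
  proof
    fix a assume "a \<in> Poly_Mapping.keys t"
    then have "a \<noteq> 0" using lt by (auto simp: in_keys_iff)
    then have "dg a \<noteq> 0" by (simp add: dg_eq_0)
    then show "1 \<le> dg a" by simp
  qed
  define q where "q = const_pol (1 / ?e0) * (\<Sum>i<N. (- t) ^ i)"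
  have e1: "e * const_pol (1 / ?e0) = 1 + t" by (simp add: t_def mult.commute)
  have "e * q = (1 - (- t)) * (\<Sum>i<N. (- t) ^ i)" unfolding q_def
    by (simp add: mult.assoc[symmetric] e1)
  also have "\<dots> = 1 - (- t) ^ N" by (rule one_diff_power_eq[symmetric])
  also have "\<dots> = 1 + (- ((- t) ^ N))" by simp
  finally have "e * q = 1 + (- ((- t) ^ N))" .
  moreover have "high N (- ((- t) ^ N))" by (rule high_uminus[OF high_pow[OF high_uminus[OF ht]]])
  ultimately show ?thesis by blast
qed




lemma pm_swap: "pm (pm P A) (pm Q B) \<subseteq> pm (pm P Q) (pm A B)"
proof
  fix x assume "x \<in> pm (pm P A) (pm Q B)"
  then obtain y z where x: "x = y * z" "y \<in> pm P A" "z \<in> pm Q B" by (rule pmE)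
  from x(2) obtain p a where y: "y = p * a" "p \<in> P" "a \<in> A" by (rule pmE)
  from x(3) obtain q b where z: "z = q * b" "q \<in> Q" "b \<in> B" by (rule pmE)
  have "x = (p * q) * (a * b)" using x y z by (simp add: mult_ac)
  moreover have "p * q \<in> pm P Q" using y z by (intro pmI)
  moreover have "a * b \<in> pm A B" using y z by (intro pmI)
  ultimately show "x \<in> pm (pm P Q) (pm A B)" by (simp add: pmI)
qed

lemma exp_split_k: "k \<le> dg (a :: 'n::finite \<Rightarrow>\<^sub>0 nat) \<Longrightarrow> \<exists>a1 a2. a = a1 + a2 \<and> dg a1 = k"
proof (induct k)
  case 0 then show ?case by (intro exI[of _ 0] exI[of _ a]) simp
next
  case (Suc k)
  then obtain a1 a2 where a: "a = a1 + a2" "dg a1 = k" by auto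
  then have "0 < dg a2" using Suc(2) dg_add[of a1 a2] by simp
  then obtain b i where bi: "a2 = b + Poly_Mapping.single i 1" "dg b + 1 = dg a2" by (rule exp_split_dg)
  have "a = (a1 + Poly_Mapping.single i 1) + b" using a bi by (simp add: add_ac)
  moreover have "dg (a1 + Poly_Mapping.single i 1) = Suc k" using a(2) dg_single1[of i] by (simp only: dg_add)
  ultimately show ?case by blast
qed

locale keyctx =
  fixes X :: "('n::finite \<Rightarrow> 'k::field) set" and I J :: "('n, 'k) frac set" and r m :: nat
  assumes I: "loc_ideal X I" and J: "loc_ideal X J"
    and rI: "ideal_pow X loc_max r \<subseteq> I" and rJ: "ideal_pow X loc_max r \<subseteq> J" and rm: "r \<le> m"
begin

definition W :: "nat \<Rightarrow> ('n, 'k) mpol set" where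
  "W B = pm (pm (Ipol I m) (Ipol J m)) (Apol B)"

lemma W_mono: "B \<le> B' \<Longrightarrow> W B \<subseteq> W B'"
  unfolding W_def by (rule pm_mono[OF order_refl Apol_mono])

lemma lcW_mono: "g \<in> lc (W B) \<Longrightarrow> B \<le> B' \<Longrightarrow> g \<in> lc (W B')"
  using lc_mono W_mono by blast

lemma PROD:
  assumes u: "(u, 1) \<in> I" and w: "(w, 1) \<in> J" and B: "tdeg u + tdeg w \<le> B"
  shows "u * w \<in> lc (W B)"
proof -
  have "u \<in> Ipol I (m + tdeg u)" using u by (simp add: Ipol_iff)
  then have u': "u \<in> lc (pm (Ipol I m) (Apol (tdeg u)))" by (rule DR[OF I rI rm])
  have "w \<in> Ipol J (m + tdeg w)" using w by (simp add: Ipol_iff)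
  then have w': "w \<in> lc (pm (Ipol J m) (Apol (tdeg w)))" by (rule DR[OF J rJ rm])
  have "u * w \<in> lc (pm (pm (Ipol I m) (Apol (tdeg u))) (pm (Ipol J m) (Apol (tdeg w))))"
    by (rule lc_mult[OF u' w'])
  moreover have "pm (pm (Ipol I m) (Apol (tdeg u))) (pm (Ipol J m) (Apol (tdeg w))) \<subseteq> W B"
  proof -
    have "pm (pm (Ipol I m) (Apol (tdeg u))) (pm (Ipol J m) (Apol (tdeg w)))
        \<subseteq> pm (pm (Ipol I m) (Ipol J m)) (pm (Apol (tdeg u)) (Apol (tdeg w)))" by (rule pm_swap)
    also have "\<dots> \<subseteq> pm (pm (Ipol I m) (Ipol J m)) (Apol (tdeg u + tdeg w))"
      by (rule pm_mono[OF order_refl pm_Apol])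
    also have "\<dots> \<subseteq> W B" unfolding W_def by (rule pm_mono[OF order_refl Apol_mono[OF B]])
    finally show ?thesis .
  qed
  ultimately show ?thesis by (rule lc_mono)
qed

lemma vpart: "v \<in> idl (IJp I J) \<Longrightarrow> \<exists>B. v * q \<in> lc (W B)"
proof (induct v rule: idl.induct)
  case idl0 then show ?case by (auto intro: lc0)
next
  case (idlS s t c)
  from idlS(1) obtain u w where s: "s = u * w" "(u, 1) \<in> I" "(w, 1) \<in> J" unfolding IJp_def by blast
  obtain B1 where B1: "t * q \<in> lc (W B1)" using idlS(3) by blast
  have cu: "(c * q * u, 1) \<in> I" using li_polmul[OF I s(2)] .
  let ?B2 = "tdeg (c * q * u) + tdeg w"
  have "(c * q * u) * w \<in> lc (W ?B2)" by (rule PROD[OF cu s(3)]) simp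
  then have a: "(c * q * u) * w \<in> lc (W (max B1 ?B2))" by (rule lcW_mono) simp
  have b: "t * q \<in> lc (W (max B1 ?B2))" using B1 by (rule lcW_mono) simp
  have "(c * s + t) * q = (c * q * u) * w + t * q" using s by (simp add: algebra_simps)
  then show ?case using lc_add[OF a b] by metis
qed

lemma hpart: "high (2 * r) g \<Longrightarrow> g \<in> lc (W (tdeg g))"
proof -
  assume h: "high (2 * r) g"
  have "(\<Sum>a\<in>Poly_Mapping.keys g. Poly_Mapping.single a (Poly_Mapping.lookup g a)) \<in> lc (W (tdeg g))"
  proof (rule lc_sum)
    fix a assume a: "a \<in> Poly_Mapping.keys g"
    then have da: "2 * r \<le> dg a" "dg a \<le> tdeg g" using h dg_le_tdeg by (auto simp: high_def)
    then obtain a1 a2 where aa: "a = a1 + a2" "dg a1 = r" using exp_split_k[of r a] by auto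
    have d2: "r \<le> dg a2" using da aa dg_add[of a1 a2] by simp
    have u: "(Poly_Mapping.single a1 (Poly_Mapping.lookup g a), 1) \<in> I" by (rule mono_in_I[OF I rI]) (simp add: aa)
    have w: "(Poly_Mapping.single a2 1, 1) \<in> J" by (rule mono_in_I[OF J rJ d2])
    have "tdeg (Poly_Mapping.single a1 (Poly_Mapping.lookup g a)) + tdeg (Poly_Mapping.single a2 (1::'k)) \<le> tdeg g"
      using tdeg_single[of a1 "Poly_Mapping.lookup g a"] tdeg_single[of a2 "1::'k"] da aa dg_add[of a1 a2] by simp
    then have "Poly_Mapping.single a1 (Poly_Mapping.lookup g a) * Poly_Mapping.single a2 1 \<in> lc (W (tdeg g))"
      by (rule PROD[OF u w])
    then show "Poly_Mapping.single a (Poly_Mapping.lookup g a) \<in> lc (W (tdeg g))"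
      by (simp add: mult_single aa)
  qed simp
  then show ?thesis using poly_sum_single[of g] by simp
qed

lemma KEY:
  assumes f: "(f, 1) \<in> ideal_prod X I J"
  shows "\<exists>B. f \<in> lcX X (W B)"
proof -
  obtain e v where ev: "peval e origin \<noteq> 0" "v \<in> idl (IJp I J)" "\<forall>x\<in>X. peval e x * peval f x = peval v x"
    using prod_char[OF I J f] by blast
  obtain q \<epsilon> where qe: "e * q = 1 + \<epsilon>" "high (2 * r) \<epsilon>" using inverse_high[OF ev(1)] by blast
  obtain B1 where B1: "v * q \<in> lc (W B1)" using vpart[OF ev(2)] by blast
  have "high (0 + 2 * r) (f * \<epsilon>)" by (rule high_mult[OF high_0 qe(2)])
  then have "f * \<epsilon> \<in> lc (W (tdeg (f * \<epsilon>)))" using hpart by simp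
  then have a: "f * \<epsilon> \<in> lc (W (max B1 (tdeg (f * \<epsilon>))))" by (rule lcW_mono) simp
  have b: "v * q \<in> lc (W (max B1 (tdeg (f * \<epsilon>))))" using B1 by (rule lcW_mono) simp
  have c: "v * q - f * \<epsilon> \<in> lc (W (max B1 (tdeg (f * \<epsilon>))))" by (rule lc_diff[OF b a])
  have "eqX X f (v * q - f * \<epsilon>)" unfolding eqX_def
  proof
    fix x assume x: "x \<in> X"
    have "peval e x * peval q x = 1 + peval \<epsilon> x" using arg_cong[OF qe(1), of "\<lambda>p. peval p x"]
      by (simp add: peval_mult peval_add)
    then have "peval f x = peval f x * (peval e x * peval q x) - peval f x * peval \<epsilon> x"
      by (simp add: algebra_simps)
    also have "\<dots> = (peval e x * peval f x) * peval q x - peval f x * peval \<epsilon> x" by (simp add: mult_ac)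
    also have "\<dots> = peval (v * q - f * \<epsilon>) x" using ev(3) x by (simp add: peval_mult peval_diff)
    finally show "peval f x = peval (v * q - f * \<epsilon>) x" .
  qed
  then show ?thesis using c unfolding lcX_def by blast
qed

end




lemma exp_split_gen: fixes a :: "'n \<Rightarrow>\<^sub>0 nat" assumes "k \<le> Poly_Mapping.lookup a i"
  shows "a = (a - Poly_Mapping.single i k) + Poly_Mapping.single i k"
proof (rule poly_mapping_eqI)
  fix j show "Poly_Mapping.lookup a j = Poly_Mapping.lookup (a - Poly_Mapping.single i k + Poly_Mapping.single i k) j"
  proof (cases "j = i")
    case True then show ?thesis using assms by (simp add: lookup_add lookup_minus)
  next
    case False then show ?thesis by (simp add: lookup_add lookup_minus lookup_single_not_eq)
  qed
qed

lemma lcX_mult: "g \<in> lcX X P \<Longrightarrow> h \<in> lc Q \<Longrightarrow> g * h \<in> lcX X (pm P Q)"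
proof -
  assume g: "g \<in> lcX X P" and h: "h \<in> lc Q"
  then obtain f where f: "f \<in> lc P" "eqX X g f" by (auto simp: lcX_def)
  have "f * h \<in> lc (pm P Q)" using lc_mult[OF f(1) h] .
  moreover have "eqX X (g * h) (f * h)" using f(2) by (simp add: eqX_def peval_mult)
  ultimately show ?thesis unfolding lcX_def by blast
qed

lemma lcX_mono: "g \<in> lcX X P \<Longrightarrow> P \<subseteq> Q \<Longrightarrow> g \<in> lcX X Q"
  unfolding lcX_def using lc_mono by blast

lemma lcX_sum: "finite S \<Longrightarrow> (\<And>s. s \<in> S \<Longrightarrow> g s \<in> lcX X Q) \<Longrightarrow> (\<Sum>s\<in>S. g s) \<in> lcX X Q"
proof -
  assume S: "finite S" and g: "\<And>s. s \<in> S \<Longrightarrow> g s \<in> lcX X Q"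
  have "(\<Sum>s\<in>S. g s) \<in> lc (g ` S)" by (rule lc_sum[OF S]) (auto intro: lc_base)
  moreover have "g ` S \<subseteq> lcX X Q" using g by blast
  ultimately show ?thesis by (rule lcX_lc)
qed

lemma pm_rot: "pm (pm P Z) A \<subseteq> pm (pm P A) Z"
proof
  fix x assume "x \<in> pm (pm P Z) A"
  then obtain y a where x: "x = y * a" "y \<in> pm P Z" "a \<in> A" by (rule pmE)
  from x(2) obtain p z where y: "y = p * z" "p \<in> P" "z \<in> Z" by (rule pmE)
  have "x = (p * a) * z" using x y by (simp add: mult_ac)
  moreover have "p * a \<in> pm P A" using y x by (intro pmI)
  ultimately show "x \<in> pm (pm P A) Z" using y(3) by (simp add: pmI)
qed

lemma var_in_I:
  assumes I: "loc_ideal X I" and r: "ideal_pow X loc_max r \<subseteq> I" and rm: "r \<le> m"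
  shows "Poly_Mapping.single (Poly_Mapping.single i m) 1 \<in> Ipol I m"
  using tdeg_single[of "Poly_Mapping.single i m" 1] dg_single[of i m] mono_in_I[OF I r, of "Poly_Mapping.single i m" 1] rm
  by (simp add: Ipol_iff)

context keyctx begin

lemma shift:
  assumes f: "f \<in> lcX X (W B0)" and tf: "tdeg f \<le> m + m" and B: "B0 + (m + m) * card (UNIV :: 'n set) \<le> B"
    and a: "a \<in> Apol B"
  shows "f * a \<in> lcX X (W B)"
proof -
  have "f * a = (\<Sum>b\<in>Poly_Mapping.keys a. f * Poly_Mapping.single b (Poly_Mapping.lookup a b))"
    by (subst poly_sum_single[of a]) (simp add: sum_distrib_left)
  also have "\<dots> \<in> lcX X (W B)"
  proof (rule lcX_sum[OF finite_keys])
    fix b assume b: "b \<in> Poly_Mapping.keys a"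
    let ?c = "Poly_Mapping.lookup a b"
    have db: "dg b \<le> B" using b a dg_le_tdeg[of b a] by (simp add: Apol_iff)
    show "f * Poly_Mapping.single b ?c \<in> lcX X (W B)"
    proof (cases "dg b + B0 \<le> B")
      case True
      have s: "Poly_Mapping.single b ?c \<in> lc (Apol (dg b))"
        using tdeg_single[of b ?c] by (intro lc_base) (simp add: Apol_iff)
      have "f * Poly_Mapping.single b ?c \<in> lcX X (pm (W B0) (Apol (dg b)))" by (rule lcX_mult[OF f s])
      moreover have "pm (W B0) (Apol (dg b)) \<subseteq> W B"
      proof -
        have "pm (W B0) (Apol (dg b)) = pm (pm (Ipol I m) (Ipol J m)) (pm (Apol B0) (Apol (dg b)))"
          unfolding W_def by (rule pm_assoc)
        also have "\<dots> \<subseteq> pm (pm (Ipol I m) (Ipol J m)) (Apol (B0 + dg b))" by (rule pm_mono[OF order_refl pm_Apol])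
        also have "\<dots> = W (B0 + dg b)" by (simp add: W_def)
        also have "\<dots> \<subseteq> W B" by (rule W_mono) (use True in simp)
        finally show ?thesis .
      qed
      ultimately show ?thesis by (rule lcX_mono)
    next
      case False
      have "\<exists>i. m + m \<le> Poly_Mapping.lookup b i"
      proof (rule ccontr)
        assume nx: "\<not> ?thesis"
        have "\<forall>i. Poly_Mapping.lookup b i \<le> m + m"
        proof
          fix i have "\<not> m + m \<le> Poly_Mapping.lookup b i" using nx by blast
          then show "Poly_Mapping.lookup b i \<le> m + m" by simp
        qed
        then have "dg b \<le> (\<Sum>i\<in>(UNIV::'n set). m + m)" unfolding dg_def by (intro sum_mono) auto
        then have "dg b \<le> (m + m) * card (UNIV :: 'n set)" by (simp add: mult.commute)
        then show False using False B by simp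
      qed
      then obtain i where i: "m + m \<le> Poly_Mapping.lookup b i" by blast
      let ?b' = "b - Poly_Mapping.single i (m + m)"
      have bsplit: "b = ?b' + Poly_Mapping.single i (m + m)" by (rule exp_split_gen[OF i])
      then have dgb: "dg b = dg ?b' + (m + m)" using dg_add[of ?b' "Poly_Mapping.single i (m + m)"] dg_single by simp
      let ?x = "Poly_Mapping.single (Poly_Mapping.single i m) (1::'k)"
      have "Poly_Mapping.single i (m + m) = Poly_Mapping.single i m + Poly_Mapping.single i m"
        by (simp add: single_add)
      then have "Poly_Mapping.single b ?c = ?x * ?x * Poly_Mapping.single ?b' ?c"
        using bsplit by (simp add: mult_single add_ac)
      then have eq: "f * Poly_Mapping.single b ?c = (?x * ?x) * (f * Poly_Mapping.single ?b' ?c)"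
        by (simp add: mult_ac)
      have xI: "?x \<in> Ipol I m" by (rule var_in_I[OF I rI rm])
      have xJ: "?x \<in> Ipol J m" by (rule var_in_I[OF J rJ rm])
      have "tdeg (f * Poly_Mapping.single ?b' ?c) \<le> B"
        using tdeg_mult[of f "Poly_Mapping.single ?b' ?c"] tdeg_single[of ?b' ?c] tf dgb db by simp
      then have "f * Poly_Mapping.single ?b' ?c \<in> Apol B" by (simp add: Apol_iff)
      then have "(?x * ?x) * (f * Poly_Mapping.single ?b' ?c) \<in> W B"
        unfolding W_def using xI xJ by (intro pmI)
      then show ?thesis unfolding eq by (intro lcX_base lc_base)
    qed
  qed
  finally show ?thesis .
qed

end

lemma KX_Apol:
  fixes X :: "('n::finite \<Rightarrow> 'k::field) set"
  assumes X: "zclosed X"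
  shows "KX X (RR X (Apol b))"
proof -
  have "\<forall>p\<in>(Apol b :: ('n, 'k) mpol set). tdeg p \<le> b" by (simp add: Apol_iff)
  from FD[OF subsp_Apol this] obtain F :: "('n, 'k) mpol set" where F: "finite F" "F \<subseteq> Apol b" "Apol b \<subseteq> lc F" by (elim exE conjE)
  show ?thesis
  proof (rule KX_RR[OF X F])
    show "\<forall>Y. zcomponent X Y \<longrightarrow> (\<exists>p\<in>Apol b. \<exists>y\<in>Y. peval p y \<noteq> 0)"
    proof (intro allI impI)
      fix Y assume "zcomponent X Y"
      then have "Y \<noteq> {}" unfolding zcomponent_def zirred_def by simp
      then obtain y where y: "y \<in> Y" by auto
      have "peval (1::('n, 'k) mpol) y \<noteq> 0" by simp
      then show "\<exists>p\<in>Apol b. \<exists>y\<in>Y. peval p y \<noteq> 0" using one_Apol[of b] y by blast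
    qed
  qed
qed

lemma KX_Ipol:
  assumes V: "affine_variety_equidim X n" and n: "n \<ge> 1" and I: "loc_ideal X I"
    and r: "ideal_pow X loc_max r \<subseteq> I" and rm: "r \<le> m"
  shows "KX X (RR X (Ipol I m))"
proof -
  have X: "zclosed X" using V by (simp add: affine_variety_equidim_def)
  have "\<forall>p\<in>Ipol I m. tdeg p \<le> m" by (simp add: Ipol_iff)
  from FD[OF subsp_Ipol[OF I] this] obtain F where F: "finite F" "F \<subseteq> Ipol I m" "Ipol I m \<subseteq> lc F" by (elim exE conjE)
  show ?thesis
  proof (rule KX_RR[OF X F])
    show "\<forall>Y. zcomponent X Y \<longrightarrow> (\<exists>p\<in>Ipol I m. \<exists>y\<in>Y. peval p y \<noteq> 0)"
    proof (intro allI impI)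
      fix Y assume Y: "zcomponent X Y"
      obtain y where y: "y \<in> Y" "y \<noteq> origin" using comp_point[OF V n Y] by blast
      then obtain i where i: "y i \<noteq> 0" by (auto simp: origin_def)
      have "Poly_Mapping.single (Poly_Mapping.single i m) 1 \<in> Ipol I m" by (rule var_in_I[OF I r rm])
      moreover have "peval (Poly_Mapping.single (Poly_Mapping.single i m) 1) y \<noteq> 0"
        using i by (simp add: peval_var_pow)
      ultimately show "\<exists>p\<in>Ipol I m. \<exists>y\<in>Y. peval p y \<noteq> 0" using y(1) by blast
    qed
  qed
qed

lemma part1_incl:
  assumes I: "loc_ideal X I" and r: "ideal_pow X loc_max r \<subseteq> I" and rm: "r \<le> m'"
  shows "pm (pm (Ipol I m) (Apol m')) (Apol 0) \<subseteq> lcX X (pm (pm (Ipol I m') (Apol m)) (Apol 0))"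
proof
  fix x assume "x \<in> pm (pm (Ipol I m) (Apol m')) (Apol 0)"
  then obtain y z where x: "x = y * z" "y \<in> pm (Ipol I m) (Apol m')" "z \<in> Apol 0" by (rule pmE)
  from x(2) obtain u a where y: "y = u * a" "u \<in> Ipol I m" "a \<in> Apol m'" by (rule pmE)
  have "u * a \<in> Ipol I (m + m')" by (rule Ipol_mult[OF I y(2) y(3)])
  then have "u * a \<in> Ipol I (m' + m)" by (simp only: add.commute)
  then have "u * a \<in> lc (pm (Ipol I m') (Apol m))" by (rule DR[OF I r rm])
  then have "u * a * z \<in> lc (pm (pm (Ipol I m') (Apol m)) (Apol 0))" using lc_base[OF x(3)] by (rule lc_mult)
  moreover have "x = u * a * z" using x(1) y(1) by simp
  ultimately show "x \<in> lcX X (pm (pm (Ipol I m') (Apol m)) (Apol 0))" by (simp only: lcX_base)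
qed




lemma part2:
  fixes X :: "('n::finite \<Rightarrow> 'k::field) set"
  assumes X: "zclosed X" and I: "loc_ideal X I" and J: "loc_ideal X J"
    and rI: "ideal_pow X loc_max r \<subseteq> I" and rJ: "ideal_pow X loc_max r \<subseteq> J"
    and sIJ: "ideal_pow X loc_max s \<subseteq> ideal_prod X I J" and rm: "r \<le> m" and sm: "s \<le> m"
  shows "GX_eq X (rsub_of_pols X (Ipol (ideal_prod X I J) m), rsub_of_pols X (Apol m))
                 (KX_mul X (rsub_of_pols X (Ipol I m)) (rsub_of_pols X (Ipol J m)),
                  KX_mul X (rsub_of_pols X (Apol m)) (rsub_of_pols X (Apol m)))"
proof -
  interpret keyctx X I J r m using I J rI rJ rm by unfold_locales
  let ?IJ = "ideal_prod X I J"
  have IJ: "loc_ideal X ?IJ" by (rule li_prod[OF I J])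
  have "\<forall>p\<in>Ipol ?IJ (m + m). tdeg p \<le> m + m" by (simp add: Ipol_iff)
  from FD[OF subsp_Ipol[OF IJ] this] obtain F :: "('n, 'k) mpol set"
    where F: "finite F" "F \<subseteq> Ipol ?IJ (m + m)" "Ipol ?IJ (m + m) \<subseteq> lc F" by (elim exE conjE)
  have "\<forall>f\<in>F. \<exists>B. f \<in> lcX X (W B)"
  proof
    fix f assume "f \<in> F"
    then have "f \<in> Ipol ?IJ (m + m)" by (rule subsetD[OF F(2)])
    then have "(f, 1) \<in> ?IJ" by (simp add: Ipol_iff)
    then show "\<exists>B. f \<in> lcX X (W B)" by (rule KEY)
  qed
  then obtain Bf where Bf: "\<forall>f\<in>F. f \<in> lcX X (W (Bf f))" by (rule bchoice[elim_format]) blast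
  define B where "B = (\<Sum>f\<in>F. Bf f) + (m + m) * card (UNIV :: 'n set)"
  have C: "p * a \<in> lcX X (W B)" if p: "p \<in> Ipol ?IJ (m + m)" and a: "a \<in> Apol B" for p a
  proof -
    have "p \<in> lc F" using p by (rule subsetD[OF F(3)])
    then have "p * a \<in> lc (pm F {a})" using lc_base[of a "{a}"] by (intro lc_mult) auto
    moreover have "pm F {a} \<subseteq> lcX X (W B)"
    proof
      fix x assume "x \<in> pm F {a}"
      then obtain f a' where x: "x = f * a'" "f \<in> F" "a' \<in> {a}" by (rule pmE)
      have "f \<in> lcX X (W (Bf f))" using Bf x(2) by blast
      moreover have "tdeg f \<le> m + m" using x(2) F(2) by (auto simp: Ipol_iff)
      moreover have "Bf f + (m + m) * card (UNIV :: 'n set) \<le> B"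
        using member_le_sum[of f F Bf] x(2) F(1) by (simp add: B_def)
      ultimately have "f * a \<in> lcX X (W B)" using a by (intro shift)
      then show "x \<in> lcX X (W B)" using x by simp
    qed
    ultimately show ?thesis by (rule lcX_lc)
  qed
  let ?S1 = "pm (pm (Ipol ?IJ m) (pm (Apol m) (Apol m))) (Apol B)"
  let ?S2 = "pm (pm (pm (Ipol I m) (Ipol J m)) (Apol m)) (Apol B)"
  have S12: "?S1 \<subseteq> lcX X ?S2"
  proof
    fix x assume "x \<in> ?S1"
    then obtain y z where x: "x = y * z" "y \<in> pm (Ipol ?IJ m) (pm (Apol m) (Apol m))" "z \<in> Apol B" by (rule pmE)
    from x(2) obtain p aa where y: "y = p * aa" "p \<in> Ipol ?IJ m" "aa \<in> pm (Apol m) (Apol m)" by (rule pmE)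
    from y(3) obtain a1 a2 where aa: "aa = a1 * a2" "a1 \<in> Apol m" "a2 \<in> Apol m" by (rule pmE)
    have "p * a1 \<in> Ipol ?IJ (m + m)" by (rule Ipol_mult[OF IJ y(2) aa(2)])
    then have "(p * a1) * z \<in> lcX X (W B)" using x(3) by (rule C)
    then have "((p * a1) * z) * a2 \<in> lcX X (pm (W B) (Apol m))" using lc_base[OF aa(3)] by (rule lcX_mult)
    moreover have "pm (W B) (Apol m) \<subseteq> ?S2" unfolding W_def by (rule pm_rot)
    ultimately have "((p * a1) * z) * a2 \<in> lcX X ?S2" by (rule lcX_mono)
    moreover have "x = ((p * a1) * z) * a2" using x(1) y(1) aa(1) by (simp add: mult_ac)
    ultimately show "x \<in> lcX X ?S2" by simp
  qed
  have S21: "?S2 \<subseteq> lcX X ?S1"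
  proof
    fix x assume "x \<in> ?S2"
    then obtain y z where x: "x = y * z" "y \<in> pm (pm (Ipol I m) (Ipol J m)) (Apol m)" "z \<in> Apol B" by (rule pmE)
    from x(2) obtain uw a where y: "y = uw * a" "uw \<in> pm (Ipol I m) (Ipol J m)" "a \<in> Apol m" by (rule pmE)
    from y(2) obtain u w where uw: "uw = u * w" "u \<in> Ipol I m" "w \<in> Ipol J m" by (rule pmE)
    have "frac_mul (u, 1) (w, 1) \<in> ?IJ" using uw by (intro prod_mem) (auto simp: Ipol_iff)
    then have "(u * w, 1) \<in> ?IJ" by (simp add: frac_mul_def)
    moreover have "tdeg (u * w) \<le> m + m" using tdeg_mult[of u w] uw by (auto simp: Ipol_iff)
    ultimately have "u * w \<in> Ipol ?IJ (m + m)" by (simp add: Ipol_iff)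
    then have "u * w \<in> lc (pm (Ipol ?IJ m) (Apol m))" by (rule DR[OF IJ sIJ sm])
    then have "(u * w) * a \<in> lc (pm (pm (Ipol ?IJ m) (Apol m)) (Apol m))" using lc_base[OF y(3)] by (rule lc_mult)
    then have "((u * w) * a) * z \<in> lc (pm (pm (pm (Ipol ?IJ m) (Apol m)) (Apol m)) (Apol B))"
      using lc_base[OF x(3)] by (rule lc_mult)
    then have "((u * w) * a) * z \<in> lc ?S1" by (simp only: pm_assoc)
    moreover have "x = ((u * w) * a) * z" using x(1) y(1) uw(1) by simp
    ultimately show "x \<in> lcX X ?S1" by (simp add: lcX_base)
  qed
  have eq: "RR X ?S1 = RR X ?S2" using RR_mono[OF S12] RR_mono[OF S21] by (rule equalityI)
  show ?thesis unfolding GX_eq_def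
  proof (rule exI[of _ "RR X (Apol B)"], rule conjI)
    show "KX X (RR X (Apol B))" by (rule KX_Apol[OF X])
    show "KX_eq X (KX_mul X (KX_mul X (fst (rsub_of_pols X (Ipol ?IJ m), rsub_of_pols X (Apol m)))
          (snd (KX_mul X (rsub_of_pols X (Ipol I m)) (rsub_of_pols X (Ipol J m)),
                KX_mul X (rsub_of_pols X (Apol m)) (rsub_of_pols X (Apol m))))) (RR X (Apol B)))
       (KX_mul X (KX_mul X (fst (KX_mul X (rsub_of_pols X (Ipol I m)) (rsub_of_pols X (Ipol J m)),
                KX_mul X (rsub_of_pols X (Apol m)) (rsub_of_pols X (Apol m))))
          (snd (rsub_of_pols X (Ipol ?IJ m), rsub_of_pols X (Apol m)))) (RR X (Apol B)))"
      using eq by (simp add: rsub_of_pols_RR[OF X] KX_mul_RR[OF X] KX_eq_refl)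
  qed
qed

lemma part1:
  fixes X :: "('n::finite \<Rightarrow> 'k::field) set"
  assumes X: "zclosed X" and I: "loc_ideal X I" and r: "ideal_pow X loc_max r \<subseteq> I"
    and rm: "r \<le> m" and rm': "r \<le> m'"
  shows "GX_eq X (rsub_of_pols X (Ipol I m), rsub_of_pols X (Apol m))
                 (rsub_of_pols X (Ipol I m'), rsub_of_pols X (Apol m'))"
proof -
  have eq: "RR X (pm (pm (Ipol I m) (Apol m')) (Apol 0)) = RR X (pm (pm (Ipol I m') (Apol m)) (Apol 0))"
    using RR_mono[OF part1_incl[OF I r rm']] RR_mono[OF part1_incl[OF I r rm]] by (rule equalityI)
  show ?thesis unfolding GX_eq_def
  proof (rule exI[of _ "RR X (Apol 0)"], rule conjI)
    show "KX X (RR X (Apol 0))" by (rule KX_Apol[OF X])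
    show "KX_eq X (KX_mul X (KX_mul X (fst (rsub_of_pols X (Ipol I m), rsub_of_pols X (Apol m)))
            (snd (rsub_of_pols X (Ipol I m'), rsub_of_pols X (Apol m')))) (RR X (Apol 0)))
          (KX_mul X (KX_mul X (fst (rsub_of_pols X (Ipol I m'), rsub_of_pols X (Apol m')))
            (snd (rsub_of_pols X (Ipol I m), rsub_of_pols X (Apol m)))) (RR X (Apol 0)))"
      using eq by (simp add: rsub_of_pols_RR[OF X] KX_mul_RR[OF X] KX_eq_refl)
  qed
qed

theorem theorem2p7:
  fixes X :: "('n::finite \<Rightarrow> 'k::field) set" and n :: nat
  assumes "alg_closed_type TYPE('k)"
    and "affine_variety_equidim X n"
    and "n \<ge> 1"
    and "origin \<in> X"
  shows "(\<forall>I r m m'. m_primary X I \<longrightarrow> r > 0 \<longrightarrow> ideal_pow X loc_max r \<subseteq> I \<longrightarrow> r \<le> m \<longrightarrow> r \<le> m' \<longrightarrow>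
            KX X (rsub_of_pols X (Ipol I m)) \<and> KX X (rsub_of_pols X (Apol m)) \<and>
            GX_eq X (rsub_of_pols X (Ipol I m), rsub_of_pols X (Apol m))
                    (rsub_of_pols X (Ipol I m'), rsub_of_pols X (Apol m')))
       \<and> (\<forall>I J r s m. m_primary X I \<longrightarrow> m_primary X J \<longrightarrow>
            r > 0 \<longrightarrow> ideal_pow X loc_max r \<subseteq> I \<longrightarrow> ideal_pow X loc_max r \<subseteq> J \<longrightarrow>
            s > 0 \<longrightarrow> ideal_pow X loc_max s \<subseteq> ideal_prod X I J \<longrightarrow> r \<le> m \<longrightarrow> s \<le> m \<longrightarrow>
            GX_eq X (rsub_of_pols X (Ipol (ideal_prod X I J) m), rsub_of_pols X (Apol m))
                    (KX_mul X (rsub_of_pols X (Ipol I m)) (rsub_of_pols X (Ipol J m)),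
                     KX_mul X (rsub_of_pols X (Apol m)) (rsub_of_pols X (Apol m))))"
proof (intro conjI allI impI)
  have X: "zclosed X" using assms(2) by (simp add: affine_variety_equidim_def)
  fix I r m m' assume mp: "m_primary X I" and r0: "0 < r" and r: "ideal_pow X loc_max r \<subseteq> I"
    and rm: "r \<le> m" and rm': "r \<le> m'"
  have I: "loc_ideal X I" using mp by (simp add: m_primary_def)
  show "KX X (rsub_of_pols X (Ipol I m))"
    using KX_Ipol[OF assms(2) assms(3) I r rm] by (simp add: rsub_of_pols_RR[OF X])
  show "KX X (rsub_of_pols X (Apol m))"
    using KX_Apol[OF X] by (simp add: rsub_of_pols_RR[OF X])
  show "GX_eq X (rsub_of_pols X (Ipol I m), rsub_of_pols X (Apol m))
                    (rsub_of_pols X (Ipol I m'), rsub_of_pols X (Apol m'))"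
    by (rule part1[OF X I r rm rm'])
next
  have X: "zclosed X" using assms(2) by (simp add: affine_variety_equidim_def)
  fix I J r s m assume mI: "m_primary X I" and mJ: "m_primary X J" and r0: "0 < r"
    and rI: "ideal_pow X loc_max r \<subseteq> I" and rJ: "ideal_pow X loc_max r \<subseteq> J"
    and s0: "0 < s" and s: "ideal_pow X loc_max s \<subseteq> ideal_prod X I J" and rm: "r \<le> m" and sm: "s \<le> m"
  have I: "loc_ideal X I" and J: "loc_ideal X J" using mI mJ by (simp_all add: m_primary_def)
  show "GX_eq X (rsub_of_pols X (Ipol (ideal_prod X I J) m), rsub_of_pols X (Apol m))
                    (KX_mul X (rsub_of_pols X (Ipol I m)) (rsub_of_pols X (Ipol J m)),
                     KX_mul X (rsub_of_pols X (Apol m)) (rsub_of_pols X (Apol m)))"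
    by (rule part2[OF X I J rI rJ s rm sm])
qed


end
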